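(* $I_n^0$ is a right ideal of $\Omega(B_n)$. Moreover, it is the principal right ideal generated by $X_{\{0\}}$, i.e. $I_n^0=X_{\{0\}}\cdot\Omega(B_n)$.
   Context: Group algebra $\mathbb{Q}B_n$ with product composition $(uv)(i)=u(v(i))$. $B_n$: signed permutations $w=w_1\dots w_n$ (bijections of $\{\pm1,\dots,\pm n\}$ with $w(-i)=-w(i)$), values ordered $\cdots<-2<-1<1<2<\cdots$, $w_0=0$; $\mathrm{Des}(w)=\{i\in\{0,\dots,n-1\}:w_i>w_{i+1}\}$; $X_J=\sum_{\mathrm{Des}(w)\subseteq J}w$; $I_n^0=\mathrm{span}\{X_J: J\subseteq\{0,\dots,n-1\},\,0\in J\}$. A signed composition of $n$ is a sequence $\alpha=(a_1,\dots,a_k)$ of nonzero integers with $|a_1|+\dots+|a_k|=n$. For such $\alpha$, let $T_\alpha$ be the sum of all $w\in B_n$ such that, cutting $[n]$ into successive intervals of lengths $|a_1|,\dots,|a_k|$: on each interval the entries $w_j$ all have sign equal to the sign of the corresponding $a_i$ and $|w_j|$ is increasing, and these intervals are maximal with these two properties. The Mantaci–Reutenauer algebra $\Omega(B_n)$ is $\mathrm{span}\{T_\alpha\}$ over all signed compositions $\alpha$ of $n$; it is a subalgebra of $\mathbb{Q}B_n$ containing $\mathrm{span}\{X_J\}$. *)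

theory Defs
  imports Complex_Main
begin

text \<open>Signed permutations of B_n, as functions on int that are odd, fix 0 and
  every x with |x| > n, and are bijective (hence permute {-n..-1} \<union> {1..n}).\<close>
definition signed_perms :: "nat \<Rightarrow> (int \<Rightarrow> int) set" where
  "signed_perms n = {w. bij w \<and> (\<forall>x. w (- x) = - w x) \<and> (\<forall>x. \<bar>x\<bar> > int n \<longrightarrow> w x = x)}"

text \<open>Elements of the group algebra QB_n: functions B_n -> Q (coefficient of w),
  with product (uv)(i) = u(v(i)), i.e. convolution along composition.\<close>
type_synonym gelem = "(int \<Rightarrow> int) \<Rightarrow> rat"

definition gmult :: "nat \<Rightarrow> gelem \<Rightarrow> gelem \<Rightarrow> gelem" where
  "gmult n f g = (\<lambda>w. \<Sum>u\<in>signed_perms n. \<Sum>v\<in>signed_perms n.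
       if u \<circ> v = w then f u * g v else 0)"

definition qspan :: "gelem set \<Rightarrow> gelem set" where
  "qspan S = {f. \<exists>A c. finite A \<and> A \<subseteq> S \<and> f = (\<lambda>w. \<Sum>x\<in>A. c x * x w)}"

text \<open>Descent set; w_0 = w 0 = 0 since w is odd.\<close>
definition Des :: "nat \<Rightarrow> (int \<Rightarrow> int) \<Rightarrow> nat set" where
  "Des n w = {i. i < n \<and> w (int i) > w (int i + 1)}"

definition XJ :: "nat \<Rightarrow> nat set \<Rightarrow> gelem" where
  "XJ n J = (\<lambda>w. if w \<in> signed_perms n \<and> Des n w \<subseteq> J then 1 else 0)"

definition I0 :: "nat \<Rightarrow> gelem set" where
  "I0 n = qspan {XJ n J | J. J \<subseteq> {0..<n} \<and> 0 \<in> J}"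

definition signed_comps :: "nat \<Rightarrow> int list set" where
  "signed_comps n = {\<alpha>. (\<forall>a\<in>set \<alpha>. a \<noteq> 0) \<and> (\<Sum>a\<leftarrow>\<alpha>. nat \<bar>a\<bar>) = n}"

text \<open>pre \<alpha> i = |a_1| + ... + |a_i|; block i (0-indexed) is positions pre i + 1 .. pre (i+1).\<close>
definition pre :: "int list \<Rightarrow> nat \<Rightarrow> nat" where
  "pre \<alpha> i = (\<Sum>a\<leftarrow>take i \<alpha>. nat \<bar>a\<bar>)"

definition has_shape :: "int list \<Rightarrow> (int \<Rightarrow> int) \<Rightarrow> bool" where
  "has_shape \<alpha> w \<longleftrightarrow>
     (\<forall>i<length \<alpha>. \<forall>j. pre \<alpha> i < j \<and> j \<le> pre \<alpha> (Suc i) \<longrightarrow> sgn (w (int j)) = sgn (\<alpha> ! i)) \<and>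
     (\<forall>i<length \<alpha>. \<forall>j. pre \<alpha> i < j \<and> j < pre \<alpha> (Suc i) \<longrightarrow> \<bar>w (int j)\<bar> < \<bar>w (int j + 1)\<bar>) \<and>
     (\<forall>i. Suc i < length \<alpha> \<longrightarrow>
        \<not> (sgn (\<alpha> ! i) = sgn (\<alpha> ! Suc i) \<and>
           \<bar>w (int (pre \<alpha> (Suc i)))\<bar> < \<bar>w (int (pre \<alpha> (Suc i)) + 1)\<bar>))"

definition T :: "nat \<Rightarrow> int list \<Rightarrow> gelem" where
  "T n \<alpha> = (\<lambda>w. if w \<in> signed_perms n \<and> has_shape \<alpha> w then 1 else 0)"

definition Omega :: "nat \<Rightarrow> gelem set" where
  "Omega n = qspan {T n \<alpha> | \<alpha>. \<alpha> \<in> signed_comps n}"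

end

theory Submission
  imports Defs "HOL-Library.FuncSet"
begin

abbreviation BB where "BB n \<equiv> signed_perms n"

lemma B_odd: "w \<in> BB n \<Longrightarrow> w (- x) = - w x"
  by (simp add: signed_perms_def)
lemma B_out: "w \<in> BB n \<Longrightarrow> \<bar>x\<bar> > int n \<Longrightarrow> w x = x"
  by (simp add: signed_perms_def)
lemma B_bij: "w \<in> BB n \<Longrightarrow> bij w"
  by (simp add: signed_perms_def)
lemma B_inj: "w \<in> BB n \<Longrightarrow> w x = w y \<longleftrightarrow> x = y"
  using B_bij bij_def inj_eq by metis
lemma B_zero: "w \<in> BB n \<Longrightarrow> w 0 = 0"
  using B_odd[of w n 0] by simp

lemma B_range:
  assumes "w \<in> BB n" "1 \<le> \<bar>x\<bar>" "\<bar>x\<bar> \<le> int n"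
  shows "1 \<le> \<bar>w x\<bar> \<and> \<bar>w x\<bar> \<le> int n"
proof
  show "1 \<le> \<bar>w x\<bar>"
  proof (rule ccontr)
    assume "\<not> 1 \<le> \<bar>w x\<bar>"
    hence "w x = 0" by simp
    hence "w x = w 0" using B_zero[OF assms(1)] by simp
    hence "x = 0" using B_inj[OF assms(1)] by simp
    thus False using assms by simp
  qed
  show "\<bar>w x\<bar> \<le> int n"
  proof (rule ccontr)
    assume "\<not> \<bar>w x\<bar> \<le> int n"
    hence "w (w x) = w x" using B_out[OF assms(1)] by simp
    hence "w x = x" using B_inj[OF assms(1)] by simp
    thus False using assms \<open>\<not> \<bar>w x\<bar> \<le> int n\<close> by simp
  qed
qed

lemma B_comp: "u \<in> BB n \<Longrightarrow> v \<in> BB n \<Longrightarrow> u \<circ> v \<in> BB n"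
  unfolding signed_perms_def by (auto intro: bij_comp)

lemma B_inv: assumes "v \<in> BB n" shows "inv v \<in> BB n"
proof -
  have b: "bij v" using B_bij[OF assms] .
  have iv: "inv v (v y) = y" for y using b by (simp add: bij_is_inj)
  have vi: "v (inv v y) = y" for y using b by (simp add: bij_is_surj surj_f_inv_f)
  have "inv v (- x) = - inv v x" for x
  proof -
    have "v (- inv v x) = - x" using B_odd[OF assms, of "inv v x"] vi by simp
    hence "inv v (v (- inv v x)) = inv v (- x)" by simp
    thus ?thesis using iv by simp
  qed
  moreover have "\<bar>x\<bar> > int n \<Longrightarrow> inv v x = x" for x
    using B_out[OF assms, of x] iv by metis
  ultimately show ?thesis using b bij_imp_bij_inv unfolding signed_perms_def by auto
qed

lemma B_eq:
  assumes "v \<in> BB n" "v' \<in> BB n" "\<And>i. 1 \<le> i \<Longrightarrow> i \<le> int n \<Longrightarrow> v i = v' i"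
  shows "v = v'"
proof
  fix x
  show "v x = v' x"
  proof (cases "\<bar>x\<bar> > int n")
    case True thus ?thesis using B_out assms by metis
  next
    case False
    show ?thesis
    proof (cases "x = 0")
      case True thus ?thesis using B_zero[OF assms(1)] B_zero[OF assms(2)] by simp
    next
      case F0: False
      show ?thesis
      proof (cases "x > 0")
        case True thus ?thesis using assms(3)[of x] False by simp
      next
        case False
        hence "v (- x) = v' (- x)" using assms(3)[of "-x"] F0 \<open>\<not> \<bar>x\<bar> > int n\<close> by simp
        thus ?thesis using B_odd[OF assms(1), of x] B_odd[OF assms(2), of x] by simp
      qed
    qed
  qed
qed

lemma B_finite: "finite (BB n)"
proof -
  let ?S = "{-int n..int n}"
  have inj: "inj_on (\<lambda>w. restrict w ?S) (BB n)"
  proof (rule inj_onI)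
    fix v w assume v: "v \<in> BB n" and w: "w \<in> BB n" and e: "restrict v ?S = restrict w ?S"
    show "v = w"
    proof (rule B_eq[OF v w])
      fix i :: int assume "1 \<le> i" "i \<le> int n"
      hence "i \<in> ?S" by simp
      moreover have "restrict v {-int n..int n} i = restrict w {-int n..int n} i" using e by simp
      ultimately show "v i = w i" by simp
    qed
  qed
  have "(\<lambda>w. restrict w ?S) ` BB n \<subseteq> Pi\<^sub>E ?S (\<lambda>_. ?S)"
  proof
    fix f assume "f \<in> (\<lambda>w. restrict w ?S) ` BB n"
    then obtain w where w: "w \<in> BB n" "f = restrict w ?S" by auto
    have "w x \<in> ?S" if "x \<in> ?S" for x
    proof (cases "x = 0")
      case True thus ?thesis using B_zero[OF w(1)] by simp
    next
      case False
      hence "\<bar>w x\<bar> \<le> int n" using B_range[OF w(1), of x] that by auto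
      thus ?thesis by auto
    qed
    thus "f \<in> Pi\<^sub>E ?S (\<lambda>_. ?S)" using w by auto
  qed
  hence "finite ((\<lambda>w. restrict w ?S) ` BB n)"
    by (rule finite_subset) (simp add: finite_PiE)
  thus ?thesis using finite_imageD[OF _ inj] by blast
qed

lemma B_abs_bij:
  assumes "w \<in> BB n"
  shows "bij_betw (\<lambda>i. \<bar>w i\<bar>) {1..int n} {1..int n}"
proof (rule bij_betw_imageI)
  show "inj_on (\<lambda>i. \<bar>w i\<bar>) {1..int n}"
  proof (rule inj_onI)
    fix i j assume i: "i \<in> {1..int n}" and j: "j \<in> {1..int n}" and e: "\<bar>w i\<bar> = \<bar>w j\<bar>"
    hence "w i = w j \<or> w i = w (- j)" using B_odd[OF assms, of j] by (auto simp: abs_if split: if_splits)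
    hence "i = j \<or> i = - j" using B_inj[OF assms] by auto
    thus "i = j" using i j by auto
  qed
  show "(\<lambda>i. \<bar>w i\<bar>) ` {1..int n} = {1..int n}"
  proof
    show "(\<lambda>i. \<bar>w i\<bar>) ` {1..int n} \<subseteq> {1..int n}" using B_range[OF assms] by force
    show "{1..int n} \<subseteq> (\<lambda>i. \<bar>w i\<bar>) ` {1..int n}"
    proof
      fix q assume q: "q \<in> {1..int n}"
      obtain x where x: "w x = q" using B_bij[OF assms] bij_pointE by metis
      have "\<not> \<bar>x\<bar> > int n" using B_out[OF assms, of x] x q by auto
      moreover have "x \<noteq> 0" using B_zero[OF assms] x q by auto
      ultimately have "\<bar>x\<bar> \<in> {1..int n}" by auto
      moreover have "\<bar>w \<bar>x\<bar>\<bar> = q" using x q B_odd[OF assms, of x] by (cases "x \<ge> 0") auto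
      ultimately show "q \<in> (\<lambda>i. \<bar>w i\<bar>) ` {1..int n}" by force
    qed
  qed
qed

lemma pre_0[simp]: "pre \<alpha> 0 = 0" by (simp add: pre_def)

lemma pre_Suc: "i < length \<alpha> \<Longrightarrow> pre \<alpha> (Suc i) = pre \<alpha> i + nat \<bar>\<alpha> ! i\<bar>"
  by (simp add: pre_def take_Suc_conv_app_nth)

lemma pre_ge_len: "length \<alpha> \<le> i \<Longrightarrow> pre \<alpha> i = pre \<alpha> (length \<alpha>)"
  by (simp add: pre_def)

lemma pre_Suc_le: "pre \<alpha> i \<le> pre \<alpha> (Suc i)"
proof (cases "i < length \<alpha>")
  case True thus ?thesis by (simp add: pre_Suc)
next
  case False thus ?thesis using pre_ge_len[of \<alpha> i] pre_ge_len[of \<alpha> "Suc i"] by simp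
qed

lemma pre_mono: "i \<le> j \<Longrightarrow> pre \<alpha> i \<le> pre \<alpha> j"
  using lift_Suc_mono_le[of "pre \<alpha>", OF pre_Suc_le] by blast

lemma pre_le_total: "pre \<alpha> i \<le> pre \<alpha> (length \<alpha>)"
proof (cases "i \<le> length \<alpha>")
  case True thus ?thesis by (simp add: pre_mono)
next
  case False thus ?thesis using pre_ge_len[of \<alpha> i] by simp
qed

lemma pre_len_sc: "\<alpha> \<in> signed_comps n \<Longrightarrow> pre \<alpha> (length \<alpha>) = n"
  by (simp add: pre_def signed_comps_def)

lemma pre_lt: "\<alpha> \<in> signed_comps n \<Longrightarrow> i < length \<alpha> \<Longrightarrow> pre \<alpha> i < pre \<alpha> (Suc i)"
  by (auto simp: pre_Suc signed_comps_def)

lemma cover: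
  assumes a: "\<alpha> \<in> signed_comps n" and j: "1 \<le> j" "j \<le> n"
  shows "\<exists>i<length \<alpha>. pre \<alpha> i < j \<and> j \<le> pre \<alpha> (Suc i)"
proof -
  have ex: "j \<le> pre \<alpha> (length \<alpha>)" using pre_len_sc[OF a] j by simp
  define k where "k = (LEAST k. j \<le> pre \<alpha> k)"
  have k1: "j \<le> pre \<alpha> k" unfolding k_def by (rule LeastI[where P="\<lambda>k. j \<le> pre \<alpha> k", OF ex])
  have kmin: "\<not> j \<le> pre \<alpha> m" if "m < k" for m using that unfolding k_def by (rule not_less_Least)
  have "k \<noteq> 0"
  proof
    assume "k = 0" hence "pre \<alpha> k = 0" by simp
    thus False using k1 j by linarith
  qed
  then obtain i where ki: "k = Suc i" using not0_implies_Suc by blast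
  have ni: "\<not> j \<le> pre \<alpha> i" using kmin[of i] unfolding ki by blast
  have "i < length \<alpha>"
  proof (rule ccontr)
    assume "\<not> i < length \<alpha>"
    hence "pre \<alpha> i = pre \<alpha> (length \<alpha>)" using pre_ge_len[of \<alpha> i] by simp
    thus False using ex ni by linarith
  qed
  moreover have "pre \<alpha> i < j" using ni by linarith
  moreover have "j \<le> pre \<alpha> (Suc i)" using k1 unfolding ki .
  ultimately show ?thesis by blast
qed

definition key :: "nat \<Rightarrow> (int \<Rightarrow> int) \<Rightarrow> (nat \<Rightarrow> int) \<times> nat set" where
  "key n w = ((\<lambda>j. if 1 \<le> j \<and> j \<le> n then sgn (w (int j)) else 0),
     {j. 1 \<le> j \<and> j < n \<and> sgn (w (int j)) = sgn (w (int j + 1)) \<and> \<bar>w (int j)\<bar> < \<bar>w (int j + 1)\<bar>})"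

lemma key_eqD1: "key n w = key n w' \<Longrightarrow> 1 \<le> j \<Longrightarrow> j \<le> n \<Longrightarrow> sgn (w (int j)) = sgn (w' (int j))"
proof -
  assume k: "key n w = key n w'" and j: "1 \<le> j" "j \<le> n"
  have "fst (key n w) j = fst (key n w') j" using k by simp
  thus ?thesis using j unfolding key_def by simp
qed

lemma key_eqD2: "key n w = key n w' \<Longrightarrow> 1 \<le> j \<Longrightarrow> j < n \<Longrightarrow>
   (sgn (w (int j)) = sgn (w (int j + 1)) \<and> \<bar>w (int j)\<bar> < \<bar>w (int j + 1)\<bar>) \<longleftrightarrow>
   (sgn (w' (int j)) = sgn (w' (int j + 1)) \<and> \<bar>w' (int j)\<bar> < \<bar>w' (int j + 1)\<bar>)"
  unfolding key_def by (drule arg_cong[where f=snd]) (auto simp: set_eq_iff)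

lemma key_eqI:
  assumes "\<And>j. 1 \<le> j \<Longrightarrow> j \<le> n \<Longrightarrow> sgn (w (int j)) = sgn (w' (int j))"
    and "\<And>j. 1 \<le> j \<Longrightarrow> j < n \<Longrightarrow>
   (sgn (w (int j)) = sgn (w (int j + 1)) \<and> \<bar>w (int j)\<bar> < \<bar>w (int j + 1)\<bar>) \<longleftrightarrow>
   (sgn (w' (int j)) = sgn (w' (int j + 1)) \<and> \<bar>w' (int j)\<bar> < \<bar>w' (int j + 1)\<bar>)"
  shows "key n w = key n w'"
proof -
  have "fst (key n w) = fst (key n w')" unfolding key_def using assms(1) by (auto simp: fun_eq_iff)
  moreover have "snd (key n w) = snd (key n w')" unfolding key_def snd_conv
  proof (intro Collect_cong)
    fix j show "(1 \<le> j \<and> j < n \<and> sgn (w (int j)) = sgn (w (int j + 1)) \<and> \<bar>w (int j)\<bar> < \<bar>w (int j + 1)\<bar>) =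
      (1 \<le> j \<and> j < n \<and> sgn (w' (int j)) = sgn (w' (int j + 1)) \<and> \<bar>w' (int j)\<bar> < \<bar>w' (int j + 1)\<bar>)"
      by (cases "1 \<le> j \<and> j < n") (use assms(2)[of j] in auto)
  qed
  ultimately show ?thesis by (simp add: prod_eq_iff)
qed

lemma int_Suc': "int (Suc j) = int j + 1" by simp

lemma hs1: "has_shape \<alpha> w \<Longrightarrow> i < length \<alpha> \<Longrightarrow> pre \<alpha> i < j \<Longrightarrow> j \<le> pre \<alpha> (Suc i) \<Longrightarrow> sgn (w (int j)) = sgn (\<alpha> ! i)"
  unfolding has_shape_def by blast
lemma hs2: "has_shape \<alpha> w \<Longrightarrow> i < length \<alpha> \<Longrightarrow> pre \<alpha> i < j \<Longrightarrow> j < pre \<alpha> (Suc i) \<Longrightarrow> \<bar>w (int j)\<bar> < \<bar>w (int j + 1)\<bar>"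
  unfolding has_shape_def by blast
lemma hs3: "has_shape \<alpha> w \<Longrightarrow> Suc i < length \<alpha> \<Longrightarrow> sgn (\<alpha> ! i) = sgn (\<alpha> ! Suc i) \<Longrightarrow> 
   \<not> \<bar>w (int (pre \<alpha> (Suc i)))\<bar> < \<bar>w (int (pre \<alpha> (Suc i)) + 1)\<bar>"
  unfolding has_shape_def by blast

lemma shape_key_imp:
  assumes a: "\<alpha> \<in> signed_comps n" and h: "has_shape \<alpha> w" and h': "has_shape \<alpha> w'"
  shows "key n w = key n w'"
proof (rule key_eqI)
  fix j assume j: "1 \<le> j" "j \<le> n"
  then obtain i where i: "i < length \<alpha>" "pre \<alpha> i < j" "j \<le> pre \<alpha> (Suc i)" using cover[OF a] by blast
  show "sgn (w (int j)) = sgn (w' (int j))" using hs1[OF h i] hs1[OF h' i] by simp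
next
  fix j assume j: "1 \<le> j" "j < n"
  then obtain i where i: "i < length \<alpha>" "pre \<alpha> i < j" "j \<le> pre \<alpha> (Suc i)" using cover[OF a] by force
  show "(sgn (w (int j)) = sgn (w (int j + 1)) \<and> \<bar>w (int j)\<bar> < \<bar>w (int j + 1)\<bar>) \<longleftrightarrow>
   (sgn (w' (int j)) = sgn (w' (int j + 1)) \<and> \<bar>w' (int j)\<bar> < \<bar>w' (int j + 1)\<bar>)"
  proof (cases "j < pre \<alpha> (Suc i)")
    case True
    have ii: "pre \<alpha> i < Suc j" "Suc j \<le> pre \<alpha> (Suc i)" using True i by auto
    have "sgn (w (int j + 1)) = sgn (\<alpha> ! i)" "sgn (w' (int j + 1)) = sgn (\<alpha> ! i)"
      using hs1[OF h i(1) ii] hs1[OF h' i(1) ii] by (simp_all only: int_Suc')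
    thus ?thesis using hs1[OF h i] hs1[OF h' i] hs2[OF h i(1,2) True] hs2[OF h' i(1,2) True] by simp
  next
    case False
    hence jP: "j = pre \<alpha> (Suc i)" using i by simp
    have si: "Suc i < length \<alpha>"
    proof (rule ccontr)
      assume "\<not> Suc i < length \<alpha>"
      hence "pre \<alpha> (Suc i) = n" using pre_ge_len[of \<alpha> "Suc i"] pre_len_sc[OF a] by simp
      thus False using jP j by simp
    qed
    have i2: "pre \<alpha> (Suc i) < Suc j" "Suc j \<le> pre \<alpha> (Suc (Suc i))" using jP pre_lt[OF a si] by auto
    have s2: "sgn (w (int j + 1)) = sgn (\<alpha> ! Suc i)" "sgn (w' (int j + 1)) = sgn (\<alpha> ! Suc i)"
      using hs1[OF h si i2] hs1[OF h' si i2] by (simp_all only: int_Suc')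
    have s1: "sgn (w (int j)) = sgn (\<alpha> ! i)" "sgn (w' (int j)) = sgn (\<alpha> ! i)" using hs1[OF h i] hs1[OF h' i] by auto
    show ?thesis
    proof (cases "sgn (\<alpha> ! i) = sgn (\<alpha> ! Suc i)")
      case True
      have "\<not> \<bar>w (int j)\<bar> < \<bar>w (int j + 1)\<bar>" "\<not> \<bar>w' (int j)\<bar> < \<bar>w' (int j + 1)\<bar>"
        using hs3[OF h si True] hs3[OF h' si True] jP by simp_all
      thus ?thesis by blast
    next
      case False
      thus ?thesis using s1 s2 by simp
    qed
  qed
qed

lemma shape_key_rev:
  assumes a: "\<alpha> \<in> signed_comps n" and h: "has_shape \<alpha> w" and k: "key n w = key n w'"
  shows "has_shape \<alpha> w'"
proof -
  have le: "pre \<alpha> k \<le> n" for k using pre_le_total[of \<alpha> k] pre_len_sc[OF a] by simp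
  have c1: "sgn (w' (int j)) = sgn (\<alpha> ! i)" if i: "i < length \<alpha>" "pre \<alpha> i < j" "j \<le> pre \<alpha> (Suc i)" for i j
    using hs1[OF h i] key_eqD1[OF k, of j] le[of "Suc i"] i by simp
  have c2: "\<bar>w' (int j)\<bar> < \<bar>w' (int j + 1)\<bar>" if i: "i < length \<alpha>" "pre \<alpha> i < j" "j < pre \<alpha> (Suc i)" for i j
  proof -
    have ii: "pre \<alpha> i < Suc j" "Suc j \<le> pre \<alpha> (Suc i)" using i by auto
    have "sgn (w (int j + 1)) = sgn (\<alpha> ! i)" using hs1[OF h i(1) ii] by (simp only: int_Suc')
    hence "sgn (w (int j)) = sgn (w (int j + 1)) \<and> \<bar>w (int j)\<bar> < \<bar>w (int j + 1)\<bar>"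
      using hs1[OF h i(1,2)] hs2[OF h i] i by simp
    thus ?thesis using key_eqD2[OF k, of j] i le[of "Suc i"] by simp
  qed
  have c3: "\<not> (sgn (\<alpha> ! i) = sgn (\<alpha> ! Suc i) \<and>
           \<bar>w' (int (pre \<alpha> (Suc i)))\<bar> < \<bar>w' (int (pre \<alpha> (Suc i)) + 1)\<bar>)" if si: "Suc i < length \<alpha>" for i
  proof
    assume as: "sgn (\<alpha> ! i) = sgn (\<alpha> ! Suc i) \<and> \<bar>w' (int (pre \<alpha> (Suc i)))\<bar> < \<bar>w' (int (pre \<alpha> (Suc i)) + 1)\<bar>"
    let ?P = "pre \<alpha> (Suc i)"
    have i1: "i < length \<alpha>" "pre \<alpha> i < ?P" "?P \<le> pre \<alpha> (Suc i)" using si pre_lt[OF a, of i] by auto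
    have i2: "pre \<alpha> (Suc i) < Suc ?P" "Suc ?P \<le> pre \<alpha> (Suc (Suc i))" using pre_lt[OF a si] by auto
    have "sgn (w' (int ?P)) = sgn (w' (int ?P + 1))" using c1[OF i1] c1[OF si i2] as by (simp only: int_Suc')
    moreover have "1 \<le> ?P" "?P < n" using i1 pre_lt[OF a si] le[of "Suc (Suc i)"] by auto
    ultimately have "\<bar>w (int ?P)\<bar> < \<bar>w (int ?P + 1)\<bar>" using key_eqD2[OF k, of ?P] as by simp
    thus False using hs3[OF h si] as by simp
  qed
  show ?thesis unfolding has_shape_def
  proof (intro conjI allI impI)
    fix i j assume "i < length \<alpha>" "pre \<alpha> i < j \<and> j \<le> pre \<alpha> (Suc i)"
    thus "sgn (w' (int j)) = sgn (\<alpha> ! i)" using c1 by blast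
  next
    fix i j assume "i < length \<alpha>" "pre \<alpha> i < j \<and> j < pre \<alpha> (Suc i)"
    thus "\<bar>w' (int j)\<bar> < \<bar>w' (int j + 1)\<bar>" using c2 by blast
  next
    fix i assume "Suc i < length \<alpha>"
    thus "\<not> (sgn (\<alpha> ! i) = sgn (\<alpha> ! Suc i) \<and>
           \<bar>w' (int (pre \<alpha> (Suc i)))\<bar> < \<bar>w' (int (pre \<alpha> (Suc i)) + 1)\<bar>)" using c3 by blast
  qed
qed

lemma take_snoc_le: "i \<le> length \<beta> \<Longrightarrow> take i (\<beta> @ [a]) = take i \<beta>"
  by simp

lemma pre_snoc_le: "i \<le> length \<beta> \<Longrightarrow> pre (\<beta> @ [a]) i = pre \<beta> i"
  by (simp add: pre_def)

lemma pre_snoc_last: "pre (\<beta> @ [a]) (Suc (length \<beta>)) = pre \<beta> (length \<beta>) + nat \<bar>a\<bar>"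
  by (simp add: pre_def)

lemma snocD:
  assumes h: "has_shape (\<beta> @ [a]) w"
  defines "P \<equiv> pre \<beta> (length \<beta>)"
  shows "has_shape \<beta> w"
    and "\<And>j. P < j \<Longrightarrow> j \<le> P + nat \<bar>a\<bar> \<Longrightarrow> sgn (w (int j)) = sgn a"
    and "\<And>j. P < j \<Longrightarrow> j < P + nat \<bar>a\<bar> \<Longrightarrow> \<bar>w (int j)\<bar> < \<bar>w (int j + 1)\<bar>"
    and "\<beta> \<noteq> [] \<Longrightarrow> \<not> (sgn (last \<beta>) = sgn a \<and> \<bar>w (int P)\<bar> < \<bar>w (int P + 1)\<bar>)"
proof -
  show "has_shape \<beta> w" unfolding has_shape_def
  proof (intro conjI allI impI)
    fix i j assume i: "i < length \<beta>" "pre \<beta> i < j \<and> j \<le> pre \<beta> (Suc i)"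
    have "sgn (w (int j)) = sgn ((\<beta> @ [a]) ! i)"
      using hs1[OF h, of i j] i pre_snoc_le[of i \<beta> a] pre_snoc_le[of "Suc i" \<beta> a] by simp
    thus "sgn (w (int j)) = sgn (\<beta> ! i)" using i by (simp add: nth_append)
  next
    fix i j assume i: "i < length \<beta>" "pre \<beta> i < j \<and> j < pre \<beta> (Suc i)"
    show "\<bar>w (int j)\<bar> < \<bar>w (int j + 1)\<bar>"
      using hs2[OF h, of i j] i pre_snoc_le[of i \<beta> a] pre_snoc_le[of "Suc i" \<beta> a] by simp
  next
    fix i assume i: "Suc i < length \<beta>"
    have "\<not> (sgn ((\<beta> @ [a]) ! i) = sgn ((\<beta> @ [a]) ! Suc i) \<and>
           \<bar>w (int (pre (\<beta> @ [a]) (Suc i)))\<bar> < \<bar>w (int (pre (\<beta> @ [a]) (Suc i)) + 1)\<bar>)"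
      using h i unfolding has_shape_def by simp
    thus "\<not> (sgn (\<beta> ! i) = sgn (\<beta> ! Suc i) \<and>
           \<bar>w (int (pre \<beta> (Suc i)))\<bar> < \<bar>w (int (pre \<beta> (Suc i)) + 1)\<bar>)"
      using i pre_snoc_le[of "Suc i" \<beta> a] by (simp add: nth_append)
  qed
  have L: "length \<beta> < length (\<beta> @ [a])" by simp
  have N: "(\<beta> @ [a]) ! length \<beta> = a" by simp
  show "sgn (w (int j)) = sgn a" if "P < j" "j \<le> P + nat \<bar>a\<bar>" for j
    using hs1[OF h L, of j] that N pre_snoc_le[of "length \<beta>" \<beta> a] pre_snoc_last[of \<beta> a] P_def by simp
  show "\<bar>w (int j)\<bar> < \<bar>w (int j + 1)\<bar>" if "P < j" "j < P + nat \<bar>a\<bar>" for j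
    using hs2[OF h L, of j] that pre_snoc_le[of "length \<beta>" \<beta> a] pre_snoc_last[of \<beta> a] P_def by simp
  show "\<not> (sgn (last \<beta>) = sgn a \<and> \<bar>w (int P)\<bar> < \<bar>w (int P + 1)\<bar>)" if ne: "\<beta> \<noteq> []"
  proof -
    obtain k where k: "length \<beta> = Suc k" using ne by (cases \<beta>) auto
    have s: "Suc k < length (\<beta> @ [a])" using k by simp
    have "\<not> (sgn ((\<beta> @ [a]) ! k) = sgn ((\<beta> @ [a]) ! Suc k) \<and>
           \<bar>w (int (pre (\<beta> @ [a]) (Suc k)))\<bar> < \<bar>w (int (pre (\<beta> @ [a]) (Suc k)) + 1)\<bar>)"
      using hs3[OF h s] by blast
    moreover have "(\<beta> @ [a]) ! k = last \<beta>" using k ne by (simp add: nth_append last_conv_nth)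
    moreover have "(\<beta> @ [a]) ! Suc k = a" using k by (simp add: nth_append)
    moreover have "pre (\<beta> @ [a]) (Suc k) = P" using k pre_snoc_le[of "Suc k" \<beta> a] P_def by simp
    ultimately show ?thesis by simp
  qed
qed

lemma snocI:
  assumes h: "has_shape \<beta> w"
  and P: "P = pre \<beta> (length \<beta>)"
  and c1: "\<And>j. P < j \<Longrightarrow> j \<le> P + nat \<bar>a\<bar> \<Longrightarrow> sgn (w (int j)) = sgn a"
  and c2: "\<And>j. P < j \<Longrightarrow> j < P + nat \<bar>a\<bar> \<Longrightarrow> \<bar>w (int j)\<bar> < \<bar>w (int j + 1)\<bar>"
  and c3: "\<beta> \<noteq> [] \<Longrightarrow> \<not> (sgn (last \<beta>) = sgn a \<and> \<bar>w (int P)\<bar> < \<bar>w (int P + 1)\<bar>)"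
  shows "has_shape (\<beta> @ [a]) w"
  unfolding has_shape_def
proof (intro conjI allI impI)
  fix i j assume i: "i < length (\<beta> @ [a])" "pre (\<beta> @ [a]) i < j \<and> j \<le> pre (\<beta> @ [a]) (Suc i)"
  show "sgn (w (int j)) = sgn ((\<beta> @ [a]) ! i)"
  proof (cases "i < length \<beta>")
    case True
    thus ?thesis using hs1[OF h True, of j] i pre_snoc_le[of i \<beta> a] pre_snoc_le[of "Suc i" \<beta> a]
      by (simp add: nth_append)
  next
    case False
    hence "i = length \<beta>" using i by simp
    thus ?thesis using c1[of j] i pre_snoc_le[of i \<beta> a] pre_snoc_last[of \<beta> a] P by simp
  qed
next
  fix i j assume i: "i < length (\<beta> @ [a])" "pre (\<beta> @ [a]) i < j \<and> j < pre (\<beta> @ [a]) (Suc i)"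
  show "\<bar>w (int j)\<bar> < \<bar>w (int j + 1)\<bar>"
  proof (cases "i < length \<beta>")
    case True
    thus ?thesis using hs2[OF h True, of j] i pre_snoc_le[of i \<beta> a] pre_snoc_le[of "Suc i" \<beta> a] by simp
  next
    case False
    hence "i = length \<beta>" using i by simp
    thus ?thesis using c2[of j] i pre_snoc_le[of i \<beta> a] pre_snoc_last[of \<beta> a] P by simp
  qed
next
  fix i assume i: "Suc i < length (\<beta> @ [a])"
  show "\<not> (sgn ((\<beta> @ [a]) ! i) = sgn ((\<beta> @ [a]) ! Suc i) \<and>
           \<bar>w (int (pre (\<beta> @ [a]) (Suc i)))\<bar> < \<bar>w (int (pre (\<beta> @ [a]) (Suc i)) + 1)\<bar>)"
  proof (cases "Suc i < length \<beta>")
    case True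
    thus ?thesis using hs3[OF h True] pre_snoc_le[of "Suc i" \<beta> a] by (simp add: nth_append)
  next
    case False
    hence k: "length \<beta> = Suc i" using i by simp
    hence ne: "\<beta> \<noteq> []" by auto
    have "(\<beta> @ [a]) ! i = last \<beta>" using k ne by (simp add: nth_append last_conv_nth)
    moreover have "(\<beta> @ [a]) ! Suc i = a" using k by (simp add: nth_append)
    moreover have "pre (\<beta> @ [a]) (Suc i) = P" using k pre_snoc_le[of "Suc i" \<beta> a] P by simp
    ultimately show ?thesis using c3[OF ne] by simp
  qed
qed

lemma shape_exists_aux:
  assumes nz: "\<And>j. 1 \<le> j \<Longrightarrow> j \<le> n \<Longrightarrow> w (int j) \<noteq> 0"
  shows "m \<le> n \<Longrightarrow> \<exists>\<alpha>. (\<forall>a\<in>set \<alpha>. a \<noteq> 0) \<and> pre \<alpha> (length \<alpha>) = m \<and> has_shape \<alpha> w \<and>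
            (1 \<le> m \<longrightarrow> \<alpha> \<noteq> [] \<and> sgn (last \<alpha>) = sgn (w (int m)))"
proof (induction m)
  case 0
  have "has_shape [] w" unfolding has_shape_def by simp
  thus ?case by (intro exI[of _ "[]"]) simp
next
  case (Suc m)
  then obtain \<alpha> where a: "\<forall>a\<in>set \<alpha>. a \<noteq> 0" "pre \<alpha> (length \<alpha>) = m" "has_shape \<alpha> w"
    "1 \<le> m \<longrightarrow> \<alpha> \<noteq> [] \<and> sgn (last \<alpha>) = sgn (w (int m))" by auto
  have wS: "w (int (Suc m)) \<noteq> 0" using nz[of "Suc m"] Suc.prems by simp
  let ?s = "sgn (w (int (Suc m)))"
  have s0: "?s \<noteq> 0" using wS by (simp add: sgn_0_0)
  show ?case
  proof (cases "1 \<le> m \<and> sgn (w (int m)) = ?s \<and> \<bar>w (int m)\<bar> < \<bar>w (int m + 1)\<bar>")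
    case True
    hence ne: "\<alpha> \<noteq> []" and sl: "sgn (last \<alpha>) = sgn (w (int m))" using a(4) by auto
    obtain \<beta> b where ab: "\<alpha> = \<beta> @ [b]" using ne by (metis append_butlast_last_id)
    have b0: "b \<noteq> 0" using a(1) ab by simp
    have bl: "last \<alpha> = b" using ab by simp
    let ?P = "pre \<beta> (length \<beta>)"
    have hb: "has_shape (\<beta> @ [b]) w" using a(3) ab by simp
    have Pm: "?P + nat \<bar>b\<bar> = m" using a(2) ab pre_snoc_last[of \<beta> b] by simp
    have nb: "nat \<bar>b + sgn b\<bar> = nat \<bar>b\<bar> + 1" using b0 by (cases "b > 0") (auto simp: sgn_if)
    have sb: "sgn (b + sgn b) = sgn b" using b0 by (cases "b > 0") (auto simp: sgn_if)
    have "has_shape (\<beta> @ [b + sgn b]) w"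
    proof (rule snocI[OF snocD(1)[OF hb] refl])
      fix j assume j: "?P < j" "j \<le> ?P + nat \<bar>b + sgn b\<bar>"
      show "sgn (w (int j)) = sgn (b + sgn b)"
      proof (cases "j \<le> m")
        case True thus ?thesis using snocD(2)[OF hb, of j] j Pm sb by simp
      next
        case False hence "j = Suc m" using j nb Pm by simp
        thus ?thesis using True sl bl sb by simp
      qed
    next
      fix j assume j: "?P < j" "j < ?P + nat \<bar>b + sgn b\<bar>"
      show "\<bar>w (int j)\<bar> < \<bar>w (int j + 1)\<bar>"
      proof (cases "j < m")
        case True thus ?thesis using snocD(3)[OF hb, of j] j Pm by simp
      next
        case False hence "j = m" using j nb Pm by simp
        thus ?thesis using True by simp
      qed
    next
      assume "\<beta> \<noteq> []"
      thus "\<not> (sgn (last \<beta>) = sgn (b + sgn b) \<and> \<bar>w (int ?P)\<bar> < \<bar>w (int ?P + 1)\<bar>)"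
        using snocD(4)[OF hb] sb by simp
    qed
    moreover have "pre (\<beta> @ [b + sgn b]) (length (\<beta> @ [b + sgn b])) = Suc m"
      using pre_snoc_last[of \<beta> "b + sgn b"] nb Pm by simp
    moreover have "\<forall>a\<in>set (\<beta> @ [b + sgn b]). a \<noteq> 0" using a(1) ab b0 sb by (auto simp: sgn_0_0)
    moreover have "sgn (last (\<beta> @ [b + sgn b])) = ?s" using sb True sl bl by simp
    ultimately show ?thesis by blast
  next
    case False
    have "has_shape (\<alpha> @ [?s]) w"
    proof (rule snocI[OF a(3) refl])
      fix j assume j: "pre \<alpha> (length \<alpha>) < j" "j \<le> pre \<alpha> (length \<alpha>) + nat \<bar>?s\<bar>"
      hence "j = Suc m" using a(2) s0 by (auto simp: sgn_if split: if_splits)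
      thus "sgn (w (int j)) = sgn ?s" by simp
    next
      fix j assume j: "pre \<alpha> (length \<alpha>) < j" "j < pre \<alpha> (length \<alpha>) + nat \<bar>?s\<bar>"
      hence False using a(2) s0 by (auto simp: sgn_if split: if_splits)
      thus "\<bar>w (int j)\<bar> < \<bar>w (int j + 1)\<bar>" ..
    next
      assume ne: "\<alpha> \<noteq> []"
      have m1: "1 \<le> m"
      proof (rule ccontr)
        assume "\<not> 1 \<le> m" hence "m = 0" by simp
        hence "pre \<alpha> (length \<alpha>) = 0" using a(2) by simp
        moreover obtain \<beta> b where ab: "\<alpha> = \<beta> @ [b]" using ne by (metis append_butlast_last_id)
        moreover have "b \<noteq> 0" using a(1) ab by simp
        ultimately show False using pre_snoc_last[of \<beta> b] by simp
      qed
      show "\<not> (sgn (last \<alpha>) = sgn ?s \<and> \<bar>w (int (pre \<alpha> (length \<alpha>)))\<bar> < \<bar>w (int (pre \<alpha> (length \<alpha>)) + 1)\<bar>)"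
        using False m1 a(2,4) by simp
    qed
    moreover have "pre (\<alpha> @ [?s]) (length (\<alpha> @ [?s])) = Suc m"
      using pre_snoc_last[of \<alpha> ?s] a(2) s0 by (auto simp: sgn_if split: if_splits)
    moreover have "\<forall>a\<in>set (\<alpha> @ [?s]). a \<noteq> 0" using a(1) s0 by auto
    moreover have "sgn (last (\<alpha> @ [?s])) = ?s" by simp
    ultimately show ?thesis by blast
  qed
qed

lemma shape_exists:
  assumes w: "w \<in> BB n"
  shows "\<exists>\<alpha>. \<alpha> \<in> signed_comps n \<and> has_shape \<alpha> w"
proof -
  have nz: "w (int j) \<noteq> 0" if "1 \<le> j" "j \<le> n" for j using B_range[OF w, of "int j"] that by auto
  obtain \<alpha> where a: "\<forall>a\<in>set \<alpha>. a \<noteq> 0" "pre \<alpha> (length \<alpha>) = n" "has_shape \<alpha> w"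
    using shape_exists_aux[where n=n and w=w and m=n, OF nz] by auto
  have "\<alpha> \<in> signed_comps n" using a(1,2) unfolding signed_comps_def pre_def by simp
  thus ?thesis using a(3) by blast
qed

definition invset :: "nat \<Rightarrow> ((int\<Rightarrow>int) \<Rightarrow> (int\<Rightarrow>int) \<Rightarrow> bool) \<Rightarrow> gelem set" where
  "invset n R = {F. (\<forall>w. w \<notin> BB n \<longrightarrow> F w = 0) \<and> (\<forall>w\<in>BB n. \<forall>w'\<in>BB n. R w w' \<longrightarrow> F w = F w')}"

definition Dz :: "nat \<Rightarrow> (int \<Rightarrow> int) \<Rightarrow> nat set" where
  "Dz n w = Des n w - {0}"

abbreviation "KF n \<equiv> invset n (\<lambda>w w'. key n w = key n w')"
abbreviation "DF n \<equiv> invset n (\<lambda>w w'. Dz n w = Dz n w')"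

lemma invsetI:
  "(\<And>w. w \<notin> BB n \<Longrightarrow> F w = 0) \<Longrightarrow> (\<And>w w'. w \<in> BB n \<Longrightarrow> w' \<in> BB n \<Longrightarrow> R w w' \<Longrightarrow> F w = F w') \<Longrightarrow> F \<in> invset n R"
  unfolding invset_def by blast

lemma invsetD1: "F \<in> invset n R \<Longrightarrow> w \<notin> BB n \<Longrightarrow> F w = 0"
  unfolding invset_def by blast
lemma invsetD2: "F \<in> invset n R \<Longrightarrow> w \<in> BB n \<Longrightarrow> w' \<in> BB n \<Longrightarrow> R w w' \<Longrightarrow> F w = F w'"
  unfolding invset_def by blast

lemma invset_sum:
  assumes "\<And>x. x \<in> A \<Longrightarrow> g x \<in> invset n R"
  shows "(\<lambda>w. \<Sum>x\<in>A. c x * g x w) \<in> invset n R"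
proof (rule invsetI)
  fix w assume "w \<notin> BB n"
  thus "(\<Sum>x\<in>A. c x * g x w) = 0" using invsetD1[OF assms] by simp
next
  fix w w' assume "w \<in> BB n" "w' \<in> BB n" "R w w'"
  thus "(\<Sum>x\<in>A. c x * g x w) = (\<Sum>x\<in>A. c x * g x w')"
    using invsetD2[OF assms] by (intro sum.cong) auto
qed

lemma qspan_invset:
  assumes "S \<subseteq> invset n R" shows "qspan S \<subseteq> invset n R"
proof
  fix f assume "f \<in> qspan S"
  then obtain A c where "A \<subseteq> S" "f = (\<lambda>w. \<Sum>x\<in>A. c x * x w)" unfolding qspan_def by auto
  thus "f \<in> invset n R" using invset_sum[of A "\<lambda>x. x" n R c] assms by auto
qed

lemma qspan_base: "x \<in> S \<Longrightarrow> x \<in> qspan S"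
  unfolding qspan_def by (intro CollectI exI[of _ "{x}"] exI[of _ "\<lambda>_. 1"]) auto

lemma qspan_zero: "(\<lambda>w. 0) \<in> qspan S"
  unfolding qspan_def by (intro CollectI exI[of _ "{}"]) auto

lemma qspan_add:
  assumes "f \<in> qspan S" "g \<in> qspan S" shows "(\<lambda>w. f w + g w) \<in> qspan S"
proof -
  obtain A1 c1 where 1: "finite A1" "A1 \<subseteq> S" "f = (\<lambda>w. \<Sum>x\<in>A1. c1 x * x w)" using assms(1) unfolding qspan_def by auto
  obtain A2 c2 where 2: "finite A2" "A2 \<subseteq> S" "g = (\<lambda>w. \<Sum>x\<in>A2. c2 x * x w)" using assms(2) unfolding qspan_def by auto
  define c where "c x = (if x \<in> A1 then c1 x else 0) + (if x \<in> A2 then c2 x else 0)" for x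
  have "(\<Sum>x\<in>A1 \<union> A2. c x * x w) = f w + g w" for w
  proof -
    have "(\<Sum>x\<in>A1 \<union> A2. c x * x w) = (\<Sum>x\<in>A1 \<union> A2. (if x \<in> A1 then c1 x * x w else 0)) + (\<Sum>x\<in>A1 \<union> A2. (if x \<in> A2 then c2 x * x w else 0))"
      unfolding sum.distrib[symmetric] c_def by (intro sum.cong) (auto simp: algebra_simps)
    also have "\<dots> = (\<Sum>x\<in>(A1 \<union> A2) \<inter> A1. c1 x * x w) + (\<Sum>x\<in>(A1 \<union> A2) \<inter> A2. c2 x * x w)"
      using 1(1) 2(1) by (simp only: sum.inter_restrict finite_UnI)
    also have "\<dots> = f w + g w" using 1(3) 2(3) by (simp add: Un_Int_eq)
    finally show ?thesis .
  qed
  moreover have "finite (A1 \<union> A2)" "A1 \<union> A2 \<subseteq> S" using 1 2 by auto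
  ultimately show ?thesis unfolding qspan_def by (intro CollectI exI[of _ "A1 \<union> A2"] exI[of _ c]) auto
qed

lemma qspan_smult:
  assumes "f \<in> qspan S" shows "(\<lambda>w. r * f w) \<in> qspan S"
proof -
  obtain A c where 1: "finite A" "A \<subseteq> S" "f = (\<lambda>w. \<Sum>x\<in>A. c x * x w)" using assms unfolding qspan_def by auto
  have eq: "(\<lambda>w. r * f w) = (\<lambda>w. \<Sum>x\<in>A. (r * c x) * x w)"
  proof
    fix w show "r * f w = (\<Sum>x\<in>A. (r * c x) * x w)"
      unfolding 1(3) sum_distrib_left by (rule sum.cong) (simp_all only: mult.assoc)
  qed
  show ?thesis unfolding qspan_def mem_Collect_eq
    by (rule exI[of _ A], rule exI[of _ "\<lambda>x. r * c x"]) (intro conjI 1(1) 1(2) eq)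
qed

lemma qspan_sum:
  assumes "finite A" "\<And>x. x \<in> A \<Longrightarrow> g x \<in> qspan S"
  shows "(\<lambda>w. \<Sum>x\<in>A. c x * g x w) \<in> qspan S"
  using assms
proof (induction A rule: finite_induct)
  case empty thus ?case using qspan_zero by simp
next
  case (insert a A)
  have "(\<lambda>w. \<Sum>x\<in>insert a A. c x * g x w) = (\<lambda>w. c a * g a w + (\<Sum>x\<in>A. c x * g x w))"
    using insert.hyps by simp
  moreover have "(\<lambda>w. c a * g a w) \<in> qspan S" using qspan_smult insert.prems by simp
  moreover have "(\<lambda>w. \<Sum>x\<in>A. c x * g x w) \<in> qspan S" using insert by simp
  ultimately show ?case using qspan_add[of "\<lambda>w. c a * g a w" S "\<lambda>w. \<Sum>x\<in>A. c x * g x w"] by simp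
qed

lemma hs_iff:
  assumes "\<alpha> \<in> signed_comps n" "has_shape \<alpha> w0"
  shows "has_shape \<alpha> x \<longleftrightarrow> key n w0 = key n x"
  using shape_key_imp[OF assms] shape_key_rev[OF assms] by blast

lemma T_KF: "\<alpha> \<in> signed_comps n \<Longrightarrow> T n \<alpha> \<in> KF n"
proof (rule invsetI)
  fix w assume "w \<notin> BB n" thus "T n \<alpha> w = 0" by (simp add: T_def)
next
  fix w w' assume a: "\<alpha> \<in> signed_comps n" and wB: "w \<in> BB n" "w' \<in> BB n" and k: "key n w = key n w'"
  have "has_shape \<alpha> w \<longleftrightarrow> has_shape \<alpha> w'"
    using shape_key_rev[OF a _ k] shape_key_rev[OF a _ k[symmetric]] by blast
  thus "T n \<alpha> w = T n \<alpha> w'" using wB by (simp add: T_def)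
qed

lemma Omega_sub_KF: "Omega n \<subseteq> KF n"
  unfolding Omega_def by (rule qspan_invset) (auto intro: T_KF)

lemma KF_sub_Omega: "KF n \<subseteq> Omega n"
proof
  fix F assume F: "F \<in> KF n"
  define al where "al w = (SOME \<alpha>. \<alpha> \<in> signed_comps n \<and> has_shape \<alpha> w)" for w
  have al: "al w \<in> signed_comps n \<and> has_shape (al w) w" if "w \<in> BB n" for w
    unfolding al_def using someI_ex[OF shape_exists[OF that]] .
  define TT where "TT = (\<lambda>w. T n (al w)) ` BB n"
  define c where "c t = F (SOME w. w \<in> BB n \<and> t = T n (al w))" for t
  have fin: "finite TT" unfolding TT_def using B_finite by simp
  have sub: "TT \<subseteq> {T n \<alpha> | \<alpha>. \<alpha> \<in> signed_comps n}" unfolding TT_def using al by auto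
  have Tx: "T n (al w) x = (if x \<in> BB n \<and> key n w = key n x then 1 else 0)" if "w \<in> BB n" for w x
    using hs_iff[of "al w" n w x] al[OF that] by (simp add: T_def)
  have "F w = (\<Sum>t\<in>TT. c t * t w)" for w
  proof (cases "w \<in> BB n")
    case False
    hence "t w = 0" if "t \<in> TT" for t using that unfolding TT_def by (auto simp: T_def)
    hence "(\<Sum>t\<in>TT. c t * t w) = 0" by (intro sum.neutral) simp
    thus ?thesis using invsetD1[OF F False] by simp
  next
    case True
    let ?t0 = "T n (al w)"
    have t0: "?t0 \<in> TT" unfolding TT_def using True by simp
    have z: "c t * t w = 0" if "t \<in> TT - {?t0}" for t
    proof -
      have "t \<in> TT" using that by simp
      then obtain w' where w': "w' \<in> BB n" "t = T n (al w')" unfolding TT_def by blast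
      have "key n w' \<noteq> key n w"
      proof
        assume k: "key n w' = key n w"
        have "T n (al w') = ?t0" using Tx[OF w'(1)] Tx[OF True] k by (auto simp: fun_eq_iff)
        thus False using that w' by simp
      qed
      thus ?thesis using Tx[OF w'(1), of w] w' by simp
    qed
    have "(\<Sum>t\<in>TT. c t * t w) = c ?t0 * ?t0 w + (\<Sum>t\<in>TT - {?t0}. c t * t w)"
      using sum.remove[OF fin t0] by simp
    also have "\<dots> = c ?t0"
    proof -
      have "(\<Sum>t\<in>TT - {?t0}. c t * t w) = 0" using z by (intro sum.neutral) blast
      thus ?thesis using Tx[OF True, of w] True by simp
    qed
    also have "\<dots> = F w"
    proof -
      have ex: "\<exists>w''. w'' \<in> BB n \<and> ?t0 = T n (al w'')" using True by blast
      define w'' where "w'' = (SOME w''. w'' \<in> BB n \<and> ?t0 = T n (al w''))"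
      have w'': "w'' \<in> BB n" "?t0 = T n (al w'')" using someI_ex[OF ex] unfolding w''_def by auto
      have "?t0 w'' = 1" using w'' Tx[OF w''(1), of w''] by simp
      hence "key n w = key n w''" using Tx[OF True, of w''] by (simp split: if_splits)
      hence "F w'' = F w" using invsetD2[OF F w''(1) True] by simp
      thus ?thesis unfolding c_def w''_def by simp
    qed
    finally show ?thesis by simp
  qed
  hence eq: "F = (\<lambda>w. \<Sum>t\<in>TT. c t * t w)" by (rule ext)
  show "F \<in> Omega n" unfolding Omega_def qspan_def mem_Collect_eq
    by (rule exI[of _ TT], rule exI[of _ c]) (intro conjI fin sub eq)
qed

lemma Omega_eq: "Omega n = KF n"
  using Omega_sub_KF KF_sub_Omega by blast

lemma XJ_Dz: "0 \<in> J \<Longrightarrow> XJ n J w = (if w \<in> BB n \<and> Dz n w \<subseteq> J then 1 else 0)"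
  unfolding XJ_def Dz_def by auto

lemma XJ_DF: "0 \<in> J \<Longrightarrow> XJ n J \<in> DF n"
  by (rule invsetI) (auto simp: XJ_Dz)

lemma I0_sub_DF: "I0 n \<subseteq> DF n"
  unfolding I0_def by (rule qspan_invset) (auto intro: XJ_DF)

lemma Dz_sub: "Dz n w \<subseteq> {1..<n}"
  unfolding Dz_def Des_def by auto

definition EK :: "nat \<Rightarrow> nat set \<Rightarrow> gelem" where
  "EK n K = (\<lambda>w. if w \<in> BB n \<and> Dz n w = K then 1 else 0)"

lemma EK_I0:
  assumes "n \<ge> 1" shows "K \<subseteq> {1..<n} \<Longrightarrow> EK n K \<in> I0 n"
proof (induction K rule: measure_induct_rule[where f=card])
  case (less K)
  have finK: "finite K" using less.prems finite_subset by blast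
  let ?P = "{K'. K' \<subset> K}"
  have finP: "finite ?P"
  proof (rule finite_subset)
    show "?P \<subseteq> Pow K" by auto
    show "finite (Pow K)" using finK by simp
  qed
  have IH: "EK n K' \<in> I0 n" if "K' \<in> ?P" for K'
    using less.IH[of K'] that less.prems psubset_card_mono[OF finK] by auto
  have X: "XJ n (insert 0 K) \<in> I0 n"
  proof -
    have "insert 0 K \<subseteq> {0..<n}" using less.prems assms by auto
    thus ?thesis unfolding I0_def by (intro qspan_base) blast
  qed
  have eq: "EK n K w = XJ n (insert 0 K) w + (\<Sum>K'\<in>?P. (-1) * EK n K' w)" for w
  proof -
    have s1: "(\<Sum>K'\<in>?P. (-1) * EK n K' w) = - (\<Sum>K'\<in>?P. EK n K' w)" by (simp add: sum_negf)
    have s2: "(\<Sum>K'\<in>?P. EK n K' w) = (\<Sum>K'\<in>?P. if K' = Dz n w then (if w \<in> BB n then 1 else 0) else 0)"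
      unfolding EK_def by (rule sum.cong) auto
    have "(\<Sum>K'\<in>?P. (-1) * EK n K' w) = - (\<Sum>K'\<in>?P. if K' = Dz n w then (if w \<in> BB n then 1 else 0) else 0)"
      unfolding s1 s2 ..
    also have "\<dots> = - (if Dz n w \<subset> K \<and> w \<in> BB n then 1 else 0)"
      unfolding sum.delta[OF finP] by simp
    moreover have "Dz n w \<subseteq> insert 0 K \<longleftrightarrow> Dz n w \<subseteq> K" using Dz_sub[of n w] by auto
    ultimately show ?thesis unfolding EK_def XJ_Dz[OF insertI1]
      by (cases "w \<in> BB n"; cases "Dz n w = K"; cases "Dz n w \<subset> K") auto
  qed
  have "(\<lambda>w. XJ n (insert 0 K) w + (\<Sum>K'\<in>?P. (-1) * EK n K' w)) \<in> I0 n"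
  proof -
    have S1: "(\<lambda>w. \<Sum>K'\<in>?P. (-1) * EK n K' w) \<in> I0 n"
      unfolding I0_def by (rule qspan_sum[where g="EK n" and c="\<lambda>_. -1", OF finP]) (use IH in \<open>simp add: I0_def\<close>)
    show ?thesis using qspan_add[OF X[unfolded I0_def] S1[unfolded I0_def]] unfolding I0_def .
  qed
  moreover have "EK n K = (\<lambda>w. XJ n (insert 0 K) w + (\<Sum>K'\<in>?P. (-1) * EK n K' w))" using eq by (rule ext)
  ultimately show ?case by simp
qed

lemma DF_sub_I0:
  assumes "n \<ge> 1" shows "DF n \<subseteq> I0 n"
proof
  fix F assume F: "F \<in> DF n"
  define c where "c K = F (SOME w. w \<in> BB n \<and> Dz n w = K)" for K
  let ?P = "Pow {1..<n}"
  have "F w = (\<Sum>K\<in>?P. c K * EK n K w)" for w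
  proof (cases "w \<in> BB n")
    case False thus ?thesis using invsetD1[OF F False] by (simp add: EK_def)
  next
    case True
    have "(\<Sum>K\<in>?P. c K * EK n K w) = (\<Sum>K\<in>?P. if K = Dz n w then c K else 0)"
      unfolding EK_def using True by (intro sum.cong) auto
    also have "\<dots> = c (Dz n w)" using Dz_sub[of n w] by (simp add: sum.delta')
    also have "\<dots> = F w"
    proof -
      have ex: "\<exists>w''. w'' \<in> BB n \<and> Dz n w'' = Dz n w" using True by blast
      have "(SOME w''. w'' \<in> BB n \<and> Dz n w'' = Dz n w) \<in> BB n \<and> Dz n (SOME w''. w'' \<in> BB n \<and> Dz n w'' = Dz n w) = Dz n w"
        using someI_ex[OF ex] .
      thus ?thesis unfolding c_def using invsetD2[OF F _ True] by auto
    qed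
    finally show ?thesis by simp
  qed
  hence "F = (\<lambda>w. \<Sum>K\<in>?P. c K * EK n K w)" by (rule ext)
  moreover have "(\<lambda>w. \<Sum>K\<in>?P. c K * EK n K w) \<in> I0 n"
    using qspan_sum[of ?P "EK n" _ c] EK_I0[OF assms] unfolding I0_def by auto
  ultimately show "F \<in> I0 n" by simp
qed

lemma I0_eq: "n \<ge> 1 \<Longrightarrow> I0 n = DF n"
  using I0_sub_DF DF_sub_I0 by blast

definition nxt :: "nat \<Rightarrow> nat set \<Rightarrow> nat \<Rightarrow> nat" where
  "nxt n J s = Min ({j \<in> J. s < j} \<union> {n})"

definition blk :: "nat set \<Rightarrow> nat \<Rightarrow> nat" where
  "blk J q = Max {j \<in> J. j < q}"

context
  fixes n :: nat and J :: "nat set"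
  assumes J0: "0 \<in> J" and Jn: "J \<subseteq> {0..<n}"
begin

lemma finJ: "finite J" using Jn finite_subset by blast

lemma nxt_le: "nxt n J s \<le> n"
  unfolding nxt_def using finJ by (intro Min_le) auto

lemma nxt_gt: "s < n \<Longrightarrow> s < nxt n J s"
  unfolding nxt_def using finJ by (subst Min_gr_iff) auto

lemma nxt_min: "j \<in> J \<Longrightarrow> s < j \<Longrightarrow> nxt n J s \<le> j"
  unfolding nxt_def using finJ by (intro Min_le) auto

lemma nxt_cases: "nxt n J s = n \<or> (nxt n J s \<in> J \<and> s < nxt n J s)"
proof -
  have "nxt n J s \<in> {j \<in> J. s < j} \<union> {n}" unfolding nxt_def using finJ by (intro Min_in) auto
  thus ?thesis by auto
qed

lemma s_lt_n: "s \<in> J \<Longrightarrow> s < n" using Jn by auto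

lemma blk_in: "1 \<le> q \<Longrightarrow> blk J q \<in> J \<and> blk J q < q"
proof -
  assume q: "1 \<le> q"
  have "finite {j \<in> J. j < q}" using finJ by simp
  moreover have "{j \<in> J. j < q} \<noteq> {}" using J0 q by auto
  ultimately have "blk J q \<in> {j \<in> J. j < q}" unfolding blk_def by (rule Max_in)
  thus ?thesis by simp
qed

lemma blk_eq: "s \<in> J \<Longrightarrow> s < q \<Longrightarrow> q \<le> nxt n J s \<Longrightarrow> blk J q = s"
proof -
  assume s: "s \<in> J" "s < q" "q \<le> nxt n J s"
  have fin: "finite {j \<in> J. j < q}" using finJ by simp
  have "s \<in> {j \<in> J. j < q}" using s by simp
  moreover have "j \<le> s" if "j \<in> {j \<in> J. j < q}" for j
  proof (rule ccontr)
    assume "\<not> j \<le> s"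
    hence "nxt n J s \<le> j" using nxt_min that by simp
    thus False using that s by simp
  qed
  ultimately show ?thesis unfolding blk_def using fin by (intro Max_eqI) auto
qed

lemma blk_le_nxt: "1 \<le> q \<Longrightarrow> q \<le> n \<Longrightarrow> q \<le> nxt n J (blk J q)"
proof (rule ccontr)
  assume q: "1 \<le> q" "q \<le> n" and c: "\<not> q \<le> nxt n J (blk J q)"
  let ?s = "blk J q"
  have "nxt n J ?s \<in> J \<and> ?s < nxt n J ?s" using nxt_cases[of ?s] c q by auto
  hence "nxt n J ?s \<in> {j \<in> J. j < q}" using c by simp
  hence "nxt n J ?s \<le> ?s" unfolding blk_def using finJ by (intro Max_ge) auto
  thus False using \<open>nxt n J ?s \<in> J \<and> ?s < nxt n J ?s\<close> by simp
qed

lemma blk_set: "s \<in> J \<Longrightarrow> {q \<in> {1..n}. blk J q = s} = {s<..nxt n J s}"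
proof
  assume s: "s \<in> J"
  show "{q \<in> {1..n}. blk J q = s} \<subseteq> {s<..nxt n J s}"
    using blk_in blk_le_nxt by fastforce
  show "{s<..nxt n J s} \<subseteq> {q \<in> {1..n}. blk J q = s}"
  proof
    fix q assume "q \<in> {s<..nxt n J s}"
    thus "q \<in> {q \<in> {1..n}. blk J q = s}" using blk_eq[OF s, of q] nxt_le[of s] by auto
  qed
qed

lemma blk_Suc: "1 \<le> q \<Longrightarrow> q \<notin> J \<Longrightarrow> blk J (Suc q) = blk J q"
proof -
  assume "1 \<le> q" "q \<notin> J"
  hence "{j \<in> J. j < Suc q} = {j \<in> J. j < q}" using less_Suc_eq by auto
  thus ?thesis unfolding blk_def by simp
qed

lemma notJ_inside: "s \<in> J \<Longrightarrow> s < q \<Longrightarrow> q < nxt n J s \<Longrightarrow> q \<notin> J"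
  using nxt_min by fastforce

end

definition sfun :: "nat \<Rightarrow> (nat \<Rightarrow> int) \<Rightarrow> (nat \<Rightarrow> nat) \<Rightarrow> int \<Rightarrow> int" where
  "sfun n e p x = (if 1 \<le> x \<and> x \<le> int n then e (nat x) * int (p (nat x))
     else if - int n \<le> x \<and> x \<le> -1 then - (e (nat (-x)) * int (p (nat (-x)))) else x)"

lemma sfun_pos: "1 \<le> i \<Longrightarrow> i \<le> n \<Longrightarrow> sfun n e p (int i) = e i * int (p i)"
  unfolding sfun_def by simp

lemma sfun_B:
  assumes e: "\<And>i. 1 \<le> i \<Longrightarrow> i \<le> n \<Longrightarrow> e i = 1 \<or> e i = -1"
    and p: "bij_betw p {1..n} {1..n}"
  shows "sfun n e p \<in> BB n"
proof -
  let ?s = "sfun n e p"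
  have pr: "1 \<le> p i \<and> p i \<le> n" if "1 \<le> i" "i \<le> n" for i
    using bij_betwE[OF p] that by auto
  have inr: "?s x = sgn x * (e (nat \<bar>x\<bar>) * int (p (nat \<bar>x\<bar>)))" if "1 \<le> \<bar>x\<bar>" "\<bar>x\<bar> \<le> int n" for x
    using that unfolding sfun_def by (auto simp: abs_if)
  have absin: "\<bar>?s x\<bar> = int (p (nat \<bar>x\<bar>))" if "1 \<le> \<bar>x\<bar>" "\<bar>x\<bar> \<le> int n" for x
  proof -
    have "nat \<bar>x\<bar> \<ge> 1" "nat \<bar>x\<bar> \<le> n" using that by auto
    hence "\<bar>e (nat \<bar>x\<bar>)\<bar> = 1" using e by fastforce
    moreover have "x \<noteq> 0" using that by auto
    hence "\<bar>sgn x\<bar> = 1" by (simp add: abs_sgn_eq_1)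
    ultimately show ?thesis using inr[OF that] by (simp add: abs_mult)
  qed
  have outr: "?s x = x" if "\<not> (1 \<le> \<bar>x\<bar> \<and> \<bar>x\<bar> \<le> int n)" for x
    using that unfolding sfun_def by auto
  have odd: "?s (- x) = - ?s x" for x unfolding sfun_def by auto
  have inj: "inj ?s"
  proof (rule injI)
    fix x y assume eq: "?s x = ?s y"
    show "x = y"
    proof (cases "1 \<le> \<bar>x\<bar> \<and> \<bar>x\<bar> \<le> int n")
      case xin: True
      have "1 \<le> p (nat \<bar>x\<bar>) \<and> p (nat \<bar>x\<bar>) \<le> n" using pr[of "nat \<bar>x\<bar>"] xin by auto
      hence ax: "1 \<le> \<bar>?s x\<bar> \<and> \<bar>?s x\<bar> \<le> int n" using absin xin by simp
      show ?thesis
      proof (cases "1 \<le> \<bar>y\<bar> \<and> \<bar>y\<bar> \<le> int n")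
        case yin: True
        have "p (nat \<bar>x\<bar>) = p (nat \<bar>y\<bar>)" using absin[of x] absin[of y] xin yin eq by simp
        moreover have "nat \<bar>x\<bar> \<in> {1..n}" "nat \<bar>y\<bar> \<in> {1..n}" using xin yin by auto
        ultimately have "nat \<bar>x\<bar> = nat \<bar>y\<bar>" using bij_betw_imp_inj_on[OF p] by (meson inj_onD)
        hence ab: "\<bar>x\<bar> = \<bar>y\<bar>" by simp
        have xr: "1 \<le> nat \<bar>x\<bar>" "nat \<bar>x\<bar> \<le> n" using xin by auto
        have ne: "e (nat \<bar>x\<bar>) * int (p (nat \<bar>x\<bar>)) \<noteq> 0"
          using e[OF xr] pr[OF xr] by auto
        have "sgn x = sgn y" using inr[OF conjunct1[OF xin] conjunct2[OF xin]] inr[OF conjunct1[OF yin] conjunct2[OF yin]] eq ab ne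
          by simp
        hence "sgn x * \<bar>x\<bar> = sgn y * \<bar>y\<bar>" using ab by simp
        thus ?thesis by (simp add: sgn_mult_abs)
      next
        case False
        thus ?thesis using outr[OF False] ax eq by simp
      qed
    next
      case xout: False
      show ?thesis
      proof (cases "1 \<le> \<bar>y\<bar> \<and> \<bar>y\<bar> \<le> int n")
        case yin: True
        have "1 \<le> p (nat \<bar>y\<bar>) \<and> p (nat \<bar>y\<bar>) \<le> n" using pr[of "nat \<bar>y\<bar>"] yin by auto
        hence "1 \<le> \<bar>?s y\<bar> \<and> \<bar>?s y\<bar> \<le> int n" using absin yin by simp
        thus ?thesis using outr[OF xout] xout eq by simp
      next
        case False thus ?thesis using outr[OF False] outr[OF xout] eq by simp
      qed
    qed
  qed
  have surj: "surj ?s" unfolding surj_def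
  proof
    fix y show "\<exists>x. y = ?s x"
    proof (cases "1 \<le> \<bar>y\<bar> \<and> \<bar>y\<bar> \<le> int n")
      case True
      hence "nat \<bar>y\<bar> \<in> {1..n}" by auto
      then obtain i where i: "i \<in> {1..n}" "p i = nat \<bar>y\<bar>"
        using bij_betw_imp_surj_on[OF p] by (metis imageE)
      have si: "?s (int i) = e i * \<bar>y\<bar>" using sfun_pos[of i n e p] i True by simp
      have sm: "?s (- int i) = - (e i * \<bar>y\<bar>)" using odd[of "int i"] si by simp
      have "e i = 1 \<or> e i = -1" using e i by auto
      thus ?thesis
      proof
        assume "e i = 1"
        thus ?thesis using si sm by (cases "y \<ge> 0") (auto intro: exI[of _ "int i"] exI[of _ "- int i"])
      next
        assume "e i = -1"
        thus ?thesis using si sm by (cases "y \<ge> 0") (auto intro: exI[of _ "int i"] exI[of _ "- int i"])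
      qed
    next
      case False thus ?thesis using outr[OF False] by metis
    qed
  qed
  have fix_out: "?s x = x" if "\<bar>x\<bar> > int n" for x using outr that by simp
  show ?thesis unfolding signed_perms_def bij_def using inj surj odd fix_out by blast
qed

definition Phi :: "nat \<Rightarrow> nat set \<Rightarrow> ((nat \<Rightarrow> int) \<times> (nat \<Rightarrow> nat)) set" where
  "Phi n J = {(e,f). (\<forall>i. 1 \<le> i \<and> i \<le> n \<longrightarrow> (e i = 1 \<or> e i = -1) \<and> f i \<in> J) \<and>
      (\<forall>i. \<not> (1 \<le> i \<and> i \<le> n) \<longrightarrow> e i = 0 \<and> f i = 0) \<and>
      (\<forall>s\<in>J. card {i\<in>{1..n}. f i = s} = nxt n J s - s)}"

definition lt :: "(int \<Rightarrow> int) \<Rightarrow> (nat \<Rightarrow> int) \<Rightarrow> nat \<Rightarrow> int" where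
  "lt z e i = e i * z (int i)"

definition rk :: "nat \<Rightarrow> (int \<Rightarrow> int) \<Rightarrow> (nat \<Rightarrow> int) \<Rightarrow> (nat \<Rightarrow> nat) \<Rightarrow> nat \<Rightarrow> nat" where
  "rk n z e f i = card {i'\<in>{1..n}. f i' = f i \<and> lt z e i' < lt z e i}"

definition pp :: "nat \<Rightarrow> (int \<Rightarrow> int) \<Rightarrow> (nat \<Rightarrow> int) \<Rightarrow> (nat \<Rightarrow> nat) \<Rightarrow> nat \<Rightarrow> nat" where
  "pp n z e f i = f i + 1 + rk n z e f i"

definition bv :: "nat \<Rightarrow> (int \<Rightarrow> int) \<Rightarrow> (nat \<Rightarrow> int) \<times> (nat \<Rightarrow> nat) \<Rightarrow> int \<Rightarrow> int" where
  "bv n z \<phi> = sfun n (fst \<phi>) (pp n z (fst \<phi>) (snd \<phi>))"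

lemma lt_inj:
  assumes zB: "z \<in> BB n" and e: "\<And>i. 1 \<le> i \<Longrightarrow> i \<le> n \<Longrightarrow> e i = 1 \<or> e i = -1"
    and i: "1 \<le> i" "i \<le> n" and i': "1 \<le> i'" "i' \<le> n" and eq: "lt z e i = lt z e i'"
  shows "i = i'"
proof -
  have "z (int i) = z (int i') \<or> z (int i) = z (- int i')"
    using e[OF i] e[OF i'] eq B_odd[OF zB, of "int i'"] unfolding lt_def by auto
  hence "int i = int i' \<or> int i = - int i'" using B_inj[OF zB] by blast
  thus ?thesis using i i' by auto
qed

context
  fixes n :: nat and J :: "nat set" and z :: "int \<Rightarrow> int" and e :: "nat \<Rightarrow> int" and f :: "nat \<Rightarrow> nat"
  assumes J0: "0 \<in> J" and Jn: "J \<subseteq> {0..<n}" and zB: "z \<in> BB n" and ef: "(e, f) \<in> Phi n J"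
begin

lemma e_pm: "1 \<le> i \<Longrightarrow> i \<le> n \<Longrightarrow> e i = 1 \<or> e i = -1"
  using ef unfolding Phi_def by auto
lemma f_J: "1 \<le> i \<Longrightarrow> i \<le> n \<Longrightarrow> f i \<in> J"
  using ef unfolding Phi_def by auto
lemma f_card: "s \<in> J \<Longrightarrow> card {i\<in>{1..n}. f i = s} = nxt n J s - s"
  using ef unfolding Phi_def by auto

lemma lt_inj': "1 \<le> i \<Longrightarrow> i \<le> n \<Longrightarrow> 1 \<le> i' \<Longrightarrow> i' \<le> n \<Longrightarrow> lt z e i = lt z e i' \<Longrightarrow> i = i'"
  using lt_inj[of z n e i i'] zB e_pm by blast

lemma rk_lt: assumes i: "1 \<le> i" "i \<le> n" shows "rk n z e f i < card {i'\<in>{1..n}. f i' = f i}"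
  unfolding rk_def by (rule psubset_card_mono) (use i in auto)

lemma pp_range: assumes i: "1 \<le> i" "i \<le> n"
  shows "f i < pp n z e f i" "pp n z e f i \<le> nxt n J (f i)"
proof -
  show "f i < pp n z e f i" unfolding pp_def by simp
  have fJ: "f i \<in> J" using f_J[OF i] .
  have "f i < nxt n J (f i)" using nxt_gt[OF J0 Jn] s_lt_n[OF J0 Jn fJ] by blast
  thus "pp n z e f i \<le> nxt n J (f i)" using rk_lt[OF i] f_card[OF fJ] unfolding pp_def by simp
qed

lemma rk_mono: assumes i: "1 \<le> i" "i \<le> n" and i': "1 \<le> i'" "i' \<le> n"
  and ff: "f i = f i'" and l: "lt z e i < lt z e i'"
  shows "rk n z e f i < rk n z e f i'"
  unfolding rk_def by (rule psubset_card_mono) (use i i' ff l in auto)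

lemma pp_less_imp: assumes i: "1 \<le> i" "i \<le> n" and i': "1 \<le> i'" "i' \<le> n"
  and c: "f i < f i' \<or> (f i = f i' \<and> lt z e i < lt z e i')"
  shows "pp n z e f i < pp n z e f i'"
  using c
proof
  assume "f i < f i'"
  hence "nxt n J (f i) \<le> f i'" using nxt_min[OF J0 Jn f_J[OF i']] by simp
  thus ?thesis using pp_range[OF i] pp_range[OF i'] by simp
next
  assume "f i = f i' \<and> lt z e i < lt z e i'"
  thus ?thesis using rk_mono[OF i i'] unfolding pp_def by simp
qed

lemma pp_less_iff: assumes i: "1 \<le> i" "i \<le> n" and i': "1 \<le> i'" "i' \<le> n"
  shows "pp n z e f i < pp n z e f i' \<longleftrightarrow> f i < f i' \<or> (f i = f i' \<and> lt z e i < lt z e i')"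
proof
  assume "f i < f i' \<or> (f i = f i' \<and> lt z e i < lt z e i')"
  thus "pp n z e f i < pp n z e f i'" using pp_less_imp[OF i i'] by blast
next
  assume p: "pp n z e f i < pp n z e f i'"
  show "f i < f i' \<or> (f i = f i' \<and> lt z e i < lt z e i')"
  proof (rule ccontr)
    assume "\<not> ?thesis"
    hence "f i' < f i \<or> (f i' = f i \<and> lt z e i' < lt z e i) \<or> (f i = f i' \<and> lt z e i = lt z e i')" by auto
    thus False
    proof (elim disjE)
      assume "f i' < f i" thus False using pp_less_imp[OF i' i] p by simp
    next
      assume "f i' = f i \<and> lt z e i' < lt z e i" thus False using pp_less_imp[OF i' i] p by simp
    next
      assume "f i = f i' \<and> lt z e i = lt z e i'"
      hence "i = i'" using lt_inj'[OF i i'] by blast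
      thus False using p by simp
    qed
  qed
qed

lemma pp_bij: "bij_betw (pp n z e f) {1..n} {1..n}"
proof -
  have inj: "inj_on (pp n z e f) {1..n}"
  proof (rule inj_onI)
    fix i i' assume "i \<in> {1..n}" "i' \<in> {1..n}" and eq: "pp n z e f i = pp n z e f i'"
    hence i: "1 \<le> i" "i \<le> n" and i': "1 \<le> i'" "i' \<le> n" by auto
    have "\<not> (f i < f i' \<or> (f i = f i' \<and> lt z e i < lt z e i'))" using pp_less_iff[OF i i'] eq by simp
    moreover have "\<not> (f i' < f i \<or> (f i' = f i \<and> lt z e i' < lt z e i))" using pp_less_iff[OF i' i] eq by simp
    ultimately have "lt z e i = lt z e i'" by auto
    thus "i = i'" using lt_inj'[OF i i'] by blast
  qed
  have sub: "pp n z e f ` {1..n} \<subseteq> {1..n}"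
  proof
    fix q assume "q \<in> pp n z e f ` {1..n}"
    then obtain i where i: "i \<in> {1..n}" "q = pp n z e f i" by auto
    hence "pp n z e f i \<le> nxt n J (f i)" using pp_range[of i] by auto
    moreover have "nxt n J (f i) \<le> n" using nxt_le[OF J0 Jn] .
    moreover have "1 \<le> pp n z e f i" unfolding pp_def by simp
    ultimately show "q \<in> {1..n}" using i by simp
  qed
  have "pp n z e f ` {1..n} = {1..n}" using endo_inj_surj[OF _ sub inj] by simp
  thus ?thesis using inj unfolding bij_betw_def by simp
qed

lemma bv_B: "bv n z (e, f) \<in> BB n"
  unfolding bv_def using sfun_B[OF e_pm pp_bij] by simp

lemma bv_pos: "1 \<le> i \<Longrightarrow> i \<le> n \<Longrightarrow> bv n z (e, f) (int i) = e i * int (pp n z e f i)"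
  unfolding bv_def by (simp add: sfun_pos)

lemma bv_abs: "1 \<le> i \<Longrightarrow> i \<le> n \<Longrightarrow> \<bar>bv n z (e, f) (int i)\<bar> = int (pp n z e f i)"
proof -
  assume i: "1 \<le> i" "i \<le> n"
  have "\<bar>e i\<bar> = 1" using e_pm[OF i] by auto
  thus ?thesis using bv_pos[OF i] by (simp add: abs_mult)
qed

lemma bv_sgn: "1 \<le> i \<Longrightarrow> i \<le> n \<Longrightarrow> sgn (bv n z (e, f) (int i)) = e i"
proof -
  assume i: "1 \<le> i" "i \<le> n"
  have "pp n z e f i > 0" unfolding pp_def by simp
  thus ?thesis using bv_pos[OF i] e_pm[OF i] by (auto simp: sgn_mult)
qed

end

definition data :: "nat \<Rightarrow> nat set \<Rightarrow> (int \<Rightarrow> int) \<Rightarrow> (nat \<Rightarrow> int) \<times> (nat \<Rightarrow> nat)" where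
  "data n J v = ((\<lambda>i. if 1 \<le> i \<and> i \<le> n then sgn (v (int i)) else 0),
                 (\<lambda>i. if 1 \<le> i \<and> i \<le> n then blk J (nat \<bar>v (int i)\<bar>) else 0))"

definition VV :: "nat \<Rightarrow> nat set \<Rightarrow> (int \<Rightarrow> int) \<Rightarrow> (int \<Rightarrow> int) set" where
  "VV n J z = {v \<in> BB n. Des n (z \<circ> inv v) \<subseteq> J}"

lemma inv_B_app: "v \<in> BB n \<Longrightarrow> inv v (v x) = x"
  using B_bij by (simp add: bij_is_inj)

lemma u_at: assumes zB: "z \<in> BB n" and vB: "v \<in> BB n" and i: "1 \<le> i" "i \<le> n"
  shows "(z \<circ> inv v) (int (nat \<bar>v (int i)\<bar>)) = sgn (v (int i)) * z (int i)"
proof -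
  have uB: "z \<circ> inv v \<in> BB n" using B_comp[OF zB B_inv[OF vB]] .
  have uv: "(z \<circ> inv v) (v (int i)) = z (int i)" using inv_B_app[OF vB] by simp
  have nz: "v (int i) \<noteq> 0" using B_range[OF vB, of "int i"] i by auto
  show ?thesis
  proof (cases "v (int i) > 0")
    case True thus ?thesis using uv by simp
  next
    case False
    hence "int (nat \<bar>v (int i)\<bar>) = - v (int i)" by simp
    thus ?thesis using uv B_odd[OF uB, of "v (int i)"] False nz by (simp add: sgn_if)
  qed
qed

lemma Pbij: assumes vB: "v \<in> BB n" shows "bij_betw (\<lambda>i. nat \<bar>v (int i)\<bar>) {1..n} {1..n}"
proof -
  have inj: "inj_on (\<lambda>i. nat \<bar>v (int i)\<bar>) {1..n}"
  proof (rule inj_onI)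
    fix i j assume i: "i \<in> {1..n}" and j: "j \<in> {1..n}" and e: "nat \<bar>v (int i)\<bar> = nat \<bar>v (int j)\<bar>"
    hence "\<bar>v (int i)\<bar> = \<bar>v (int j)\<bar>" by simp
    hence "v (int i) = v (int j) \<or> v (int i) = v (- int j)" using B_odd[OF vB, of "int j"] by (auto simp: abs_if split: if_splits)
    hence "int i = int j \<or> int i = - int j" using B_inj[OF vB] by auto
    thus "i = j" using i j by auto
  qed
  have sub: "(\<lambda>i. nat \<bar>v (int i)\<bar>) ` {1..n} \<subseteq> {1..n}"
  proof
    fix q assume "q \<in> (\<lambda>i. nat \<bar>v (int i)\<bar>) ` {1..n}"
    then obtain i where "i \<in> {1..n}" "q = nat \<bar>v (int i)\<bar>" by auto
    thus "q \<in> {1..n}" using B_range[OF vB, of "int i"] by auto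
  qed
  show ?thesis unfolding bij_betw_def using inj endo_inj_surj[OF _ sub inj] by simp
qed

lemma strict_chain:
  fixes g :: "nat \<Rightarrow> int"
  assumes step: "\<And>k. a < k \<Longrightarrow> k < b \<Longrightarrow> g k < g (Suc k)"
  shows "a < i \<Longrightarrow> i < j \<Longrightarrow> j \<le> b \<Longrightarrow> g i < g j"
proof (induction j)
  case 0 thus ?case by simp
next
  case (Suc j)
  show ?case
  proof (cases "i = j")
    case True thus ?thesis using step Suc.prems by simp
  next
    case False
    hence "g i < g j" using Suc by simp
    moreover have "g j < g (Suc j)" using step Suc.prems False by simp
    ultimately show ?thesis by simp
  qed
qed

context
  fixes n :: nat and J :: "nat set" and z :: "int \<Rightarrow> int"
  assumes J0: "0 \<in> J" and Jn: "J \<subseteq> {0..<n}" and zB: "z \<in> BB n"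
begin

lemma data_bv: assumes ef: "(e, f) \<in> Phi n J" shows "data n J (bv n z (e, f)) = (e, f)"
proof -
  have "fst (data n J (bv n z (e, f))) = e"
  proof
    fix i show "fst (data n J (bv n z (e, f))) i = e i"
      using bv_sgn[OF J0 Jn zB ef, of i] ef unfolding data_def Phi_def by auto
  qed
  moreover have "snd (data n J (bv n z (e, f))) = f"
  proof
    fix i show "snd (data n J (bv n z (e, f))) i = f i"
    proof (cases "1 \<le> i \<and> i \<le> n")
      case True
      hence "nat \<bar>bv n z (e, f) (int i)\<bar> = pp n z e f i" using bv_abs[OF J0 Jn zB ef] by simp
      moreover have "blk J (pp n z e f i) = f i"
        using blk_eq[OF J0 Jn f_J[OF J0 Jn zB ef] pp_range(1)[OF J0 Jn zB ef] pp_range(2)[OF J0 Jn zB ef]] True by blast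
      ultimately show ?thesis using True unfolding data_def by simp
    next
      case False thus ?thesis using ef unfolding data_def Phi_def by auto
    qed
  qed
  ultimately show ?thesis by (simp add: prod_eq_iff)
qed

lemma bv_V: assumes ef: "(e, f) \<in> Phi n J" shows "bv n z (e, f) \<in> VV n J z"
proof -
  let ?v = "bv n z (e, f)"
  let ?u = "z \<circ> inv ?v"
  let ?p = "pp n z e f"
  have vB: "?v \<in> BB n" using bv_B[OF J0 Jn zB ef] .
  have uB: "?u \<in> BB n" using B_comp[OF zB B_inv[OF vB]] .
  have ul: "?u (int (?p i)) = lt z e i" if i: "1 \<le> i" "i \<le> n" for i
  proof -
    have "?u (int (nat \<bar>?v (int i)\<bar>)) = sgn (?v (int i)) * z (int i)" using u_at[OF zB vB i] .
    thus ?thesis using bv_abs[OF J0 Jn zB ef i] bv_sgn[OF J0 Jn zB ef i] unfolding lt_def by simp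
  qed
  have pb: "bij_betw ?p {1..n} {1..n}" using pp_bij[OF J0 Jn zB ef] .
  have fb: "blk J (?p i) = f i" if i: "1 \<le> i" "i \<le> n" for i
    using blk_eq[OF J0 Jn f_J[OF J0 Jn zB ef i] pp_range(1)[OF J0 Jn zB ef i] pp_range(2)[OF J0 Jn zB ef i]] .
  have "q \<in> J" if q: "q \<in> Des n ?u" for q
  proof (rule ccontr)
    assume qJ: "q \<notin> J"
    have qn: "q < n" and d: "?u (int q) > ?u (int q + 1)" using q unfolding Des_def by auto
    have q1: "1 \<le> q" using qJ J0 by (cases q) auto
    obtain i where i: "i \<in> {1..n}" "?p i = q" using bij_betw_imp_surj_on[OF pb] q1 qn
      by (metis atLeastAtMost_iff imageE less_imp_le_nat)
    obtain i' where i': "i' \<in> {1..n}" "?p i' = Suc q" using bij_betw_imp_surj_on[OF pb] q1 qn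
      by (metis Suc_leI atLeastAtMost_iff imageE le_SucI)
    have ir: "1 \<le> i" "i \<le> n" and ir': "1 \<le> i'" "i' \<le> n" using i i' by auto
    have "f i = f i'" using fb[OF ir] fb[OF ir'] blk_Suc[OF J0 Jn q1 qJ] i i' by simp
    moreover have "?p i < ?p i'" using i i' by simp
    ultimately have "lt z e i < lt z e i'" using pp_less_iff[OF J0 Jn zB ef ir ir'] by simp
    moreover have a: "?u (int q) = lt z e i" using ul[OF ir] i by simp
    moreover have b: "?u (int (Suc q)) = lt z e i'" using ul[OF ir'] i' by simp
    ultimately have "?u (int q) < ?u (int (Suc q))" by simp
    hence "?u (int q) < ?u (int q + 1)" unfolding int_Suc' .
    thus False using d by simp
  qed
  thus ?thesis unfolding VV_def using vB by auto
qed

lemma V_data: assumes vV: "v \<in> VV n J z"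
  shows "data n J v \<in> Phi n J" "bv n z (data n J v) = v"
proof -
  have vB: "v \<in> BB n" and Du: "Des n (z \<circ> inv v) \<subseteq> J" using vV unfolding VV_def by auto
  let ?u = "z \<circ> inv v"
  have uB: "?u \<in> BB n" using B_comp[OF zB B_inv[OF vB]] .
  define P where "P i = nat \<bar>v (int i)\<bar>" for i
  define e where "e = fst (data n J v)"
  define f where "f = snd (data n J v)"
  have dv: "data n J v = (e, f)" unfolding e_def f_def by simp
  have Pb: "bij_betw P {1..n} {1..n}" unfolding P_def using Pbij[OF vB] .
  have Pr: "1 \<le> P i \<and> P i \<le> n" if "1 \<le> i" "i \<le> n" for i using bij_betwE[OF Pb] that by auto
  have ei: "e i = sgn (v (int i))" if "1 \<le> i" "i \<le> n" for i using that unfolding e_def data_def by simp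
  have fi: "f i = blk J (P i)" if "1 \<le> i" "i \<le> n" for i using that unfolding f_def data_def P_def by simp
  have nz: "v (int i) \<noteq> 0" if "1 \<le> i" "i \<le> n" for i using B_range[OF vB, of "int i"] that by auto
  have card_eq: "card {i \<in> {1..n}. Q (P i)} = card {q \<in> {1..n}. Q q}" for Q
  proof -
    have im: "P ` {1..n} = {1..n}" using bij_betw_imp_surj_on[OF Pb] .
    have "P ` {i \<in> {1..n}. Q (P i)} = {q \<in> {1..n}. Q q}"
    proof (intro set_eqI iffI)
      fix q assume "q \<in> P ` {i \<in> {1..n}. Q (P i)}"
      thus "q \<in> {q \<in> {1..n}. Q q}" using im by auto
    next
      fix q assume q: "q \<in> {q \<in> {1..n}. Q q}"
      then obtain i where "i \<in> {1..n}" "P i = q" using im by (metis (no_types, lifting) imageE mem_Collect_eq)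
      thus "q \<in> P ` {i \<in> {1..n}. Q (P i)}" using q by auto
    qed
    moreover have "inj_on P {i \<in> {1..n}. Q (P i)}"
      using bij_betw_imp_inj_on[OF Pb] by (rule inj_on_subset) auto
    ultimately show ?thesis using card_image by metis
  qed
  show ef: "data n J v \<in> Phi n J"
    unfolding dv Phi_def
  proof (intro CollectI case_prodI conjI allI impI ballI)
    fix i assume i: "1 \<le> i \<and> i \<le> n"
    show "e i = 1 \<or> e i = -1" using ei[of i] nz[of i] i by (auto simp: sgn_if)
    show "f i \<in> J" using fi[of i] blk_in[OF J0 Jn, of "P i"] Pr[of i] i by auto
  next
    fix i assume i: "\<not> (1 \<le> i \<and> i \<le> n)"
    show "e i = 0" using i unfolding e_def data_def by auto
    show "f i = 0" using i unfolding f_def data_def by auto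
  next
    fix s assume s: "s \<in> J"
    have "{i \<in> {1..n}. f i = s} = {i \<in> {1..n}. blk J (P i) = s}" using fi by auto
    hence "card {i \<in> {1..n}. f i = s} = card {q \<in> {1..n}. blk J q = s}" using card_eq by simp
    also have "\<dots> = card {s<..nxt n J s}" using blk_set[OF J0 Jn s] by simp
    finally show "card {i \<in> {1..n}. f i = s} = nxt n J s - s" by simp
  qed
  have ef': "(e, f) \<in> Phi n J" using ef dv by simp
  have ustep: "?u (int k) < ?u (int (Suc k))" if s: "s \<in> J" "s < k" "k < nxt n J s" for s k
  proof -
    have kJ: "k \<notin> J" using notJ_inside[OF J0 Jn s] .
    have kn: "k < n" using s nxt_le[OF J0 Jn, of s] by simp
    hence "k \<notin> Des n ?u" using Du kJ by auto
    hence "\<not> ?u (int k) > ?u (int k + 1)" using kn unfolding Des_def by simp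
    moreover have "?u (int k) \<noteq> ?u (int k + 1)" using B_inj[OF uB] by simp
    ultimately have "?u (int k) < ?u (int k + 1)" by simp
    thus ?thesis unfolding int_Suc' .
  qed
  have umono: "?u (int k) < ?u (int k')" if s: "s \<in> J" "s < k" "k < k'" "k' \<le> nxt n J s" for s k k'
    using strict_chain[of s "nxt n J s" "\<lambda>k. ?u (int k)", OF ustep[OF s(1)]] s by blast
  have lt_u: "lt z e i = ?u (int (P i))" if i: "1 \<le> i" "i \<le> n" for i
    using u_at[OF zB vB i] ei[OF i] unfolding lt_def P_def by simp
  have ppP: "pp n z e f i = P i" if i: "1 \<le> i" "i \<le> n" for i
  proof -
    let ?s = "f i" and ?Q = "P i"
    have sJ: "?s \<in> J" using fi[OF i] blk_in[OF J0 Jn, of "P i"] Pr[OF i] by auto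
    have Qs: "?s < ?Q" "?Q \<le> nxt n J ?s" using fi[OF i] blk_in[OF J0 Jn, of "P i"] blk_le_nxt[OF J0 Jn, of "P i"] Pr[OF i] by auto
    have "{i' \<in> {1..n}. f i' = ?s \<and> lt z e i' < lt z e i} = {i' \<in> {1..n}. blk J (P i') = ?s \<and> ?u (int (P i')) < ?u (int ?Q)}"
      using fi lt_u i by auto
    hence "rk n z e f i = card {q \<in> {1..n}. blk J q = ?s \<and> ?u (int q) < ?u (int ?Q)}"
      unfolding rk_def using card_eq[of "\<lambda>q. blk J q = ?s \<and> ?u (int q) < ?u (int ?Q)"] by simp
    also have "{q \<in> {1..n}. blk J q = ?s \<and> ?u (int q) < ?u (int ?Q)} = {?s<..<?Q}"
    proof -
      have "{q \<in> {1..n}. blk J q = ?s \<and> ?u (int q) < ?u (int ?Q)} = {q \<in> {?s<..nxt n J ?s}. ?u (int q) < ?u (int ?Q)}"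
        using blk_set[OF J0 Jn sJ] by blast
      also have "\<dots> = {?s<..<?Q}"
      proof (intro set_eqI iffI)
        fix q assume "q \<in> {q \<in> {?s<..nxt n J ?s}. ?u (int q) < ?u (int ?Q)}"
        hence q: "?s < q" "q \<le> nxt n J ?s" "?u (int q) < ?u (int ?Q)" by auto
        have "q < ?Q"
        proof (rule ccontr)
          assume "\<not> q < ?Q"
          hence "q = ?Q \<or> ?Q < q" by auto
          thus False using umono[OF sJ Qs(1) _ q(2)] q(3) by auto
        qed
        thus "q \<in> {?s<..<?Q}" using q by simp
      next
        fix q assume "q \<in> {?s<..<?Q}"
        thus "q \<in> {q \<in> {?s<..nxt n J ?s}. ?u (int q) < ?u (int ?Q)}" using umono[OF sJ _ _ Qs(2)] Qs by auto
      qed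
      finally show ?thesis .
    qed
    finally have "rk n z e f i = ?Q - Suc ?s" by simp
    thus ?thesis unfolding pp_def using Qs by simp
  qed
  show "bv n z (data n J v) = v" unfolding dv
  proof (rule B_eq[OF bv_B[OF J0 Jn zB ef'] vB])
    fix x :: int assume x: "1 \<le> x" "x \<le> int n"
    define i where "i = nat x"
    have i: "1 \<le> i" "i \<le> n" and xi: "x = int i" using x unfolding i_def by auto
    have "bv n z (e, f) (int i) = sgn (v (int i)) * int (P i)"
      using bv_pos[OF J0 Jn zB ef' i] ppP[OF i] ei[OF i] by simp
    also have "\<dots> = v (int i)" unfolding P_def by (simp add: sgn_mult_abs)
    finally show "bv n z (e, f) x = v x" using xi by simp
  qed
qed

lemma bv_bij: "bij_betw (bv n z) (Phi n J) (VV n J z)"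
proof (rule bij_betwI')
  fix x y assume "x \<in> Phi n J" "y \<in> Phi n J"
  thus "(bv n z x = bv n z y) = (x = y)" using data_bv by (metis prod.exhaust)
next
  fix x assume "x \<in> Phi n J" thus "bv n z x \<in> VV n J z" using bv_V by (metis prod.exhaust)
next
  fix y assume "y \<in> VV n J z" thus "\<exists>x\<in>Phi n J. y = bv n z x" using V_data by metis
qed

end

lemma Dz_mem: "j \<in> Dz n w \<longleftrightarrow> 1 \<le> j \<and> j < n \<and> w (int j + 1) < w (int j)"
  unfolding Dz_def Des_def by auto

lemma lt_step:
  assumes zB: "z \<in> BB n" and j: "1 \<le> j" "j < n" and ee: "e (Suc j) = e j" and e: "e j = 1 \<or> e j = -1"
  shows "lt z e j < lt z e (Suc j) \<longleftrightarrow> (if e j = 1 then j \<notin> Dz n z else j \<in> Dz n z)"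
proof -
  have ne: "z (int j) \<noteq> z (int j + 1)" using B_inj[OF zB] by simp
  have "lt z e (Suc j) = e j * z (int j + 1)" unfolding lt_def int_Suc' using ee by simp
  thus ?thesis using e ne j unfolding lt_def Dz_mem by auto
qed

lemma key_bv:
  assumes J0: "0 \<in> J" and Jn: "J \<subseteq> {0..<n}" and z1: "z1 \<in> BB n" and z2: "z2 \<in> BB n"
    and D: "Dz n z1 = Dz n z2" and ef: "(e, f) \<in> Phi n J"
  shows "key n (bv n z1 (e, f)) = key n (bv n z2 (e, f))"
proof (rule key_eqI)
  fix j assume "1 \<le> j" "j \<le> n"
  thus "sgn (bv n z1 (e, f) (int j)) = sgn (bv n z2 (e, f) (int j))"
    using bv_sgn[OF J0 Jn z1 ef] bv_sgn[OF J0 Jn z2 ef] by simp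
next
  fix j assume j: "1 \<le> j" "j < n"
  have j1: "1 \<le> j" "j \<le> n" and j2: "1 \<le> Suc j" "Suc j \<le> n" using j by auto
  have C: "(sgn (bv n z (e, f) (int j)) = sgn (bv n z (e, f) (int j + 1)) \<and>
            \<bar>bv n z (e, f) (int j)\<bar> < \<bar>bv n z (e, f) (int j + 1)\<bar>) \<longleftrightarrow>
         (e j = e (Suc j) \<and> (f j < f (Suc j) \<or> (f j = f (Suc j) \<and> (if e j = 1 then j \<notin> Dz n z else j \<in> Dz n z))))"
    if zB: "z \<in> BB n" for z
  proof -
    have a: "sgn (bv n z (e, f) (int j)) = e j" "sgn (bv n z (e, f) (int (Suc j))) = e (Suc j)"
      using bv_sgn[OF J0 Jn zB ef j1] bv_sgn[OF J0 Jn zB ef j2] by auto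
    have b: "\<bar>bv n z (e, f) (int j)\<bar> = int (pp n z e f j)" "\<bar>bv n z (e, f) (int (Suc j))\<bar> = int (pp n z e f (Suc j))"
      using bv_abs[OF J0 Jn zB ef j1] bv_abs[OF J0 Jn zB ef j2] by auto
    have c: "pp n z e f j < pp n z e f (Suc j) \<longleftrightarrow> f j < f (Suc j) \<or> (f j = f (Suc j) \<and> lt z e j < lt z e (Suc j))"
      using pp_less_iff[OF J0 Jn zB ef j1 j2] .
    have "(sgn (bv n z (e, f) (int j)) = sgn (bv n z (e, f) (int j + 1)) \<and>
            \<bar>bv n z (e, f) (int j)\<bar> < \<bar>bv n z (e, f) (int j + 1)\<bar>) \<longleftrightarrow>
          (e j = e (Suc j) \<and> pp n z e f j < pp n z e f (Suc j))"
      using a b unfolding int_Suc' by simp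
    also have "\<dots> \<longleftrightarrow> (e j = e (Suc j) \<and> (f j < f (Suc j) \<or> (f j = f (Suc j) \<and> (if e j = 1 then j \<notin> Dz n z else j \<in> Dz n z))))"
      using c lt_step[OF zB j, of e] e_pm[OF J0 Jn zB ef j1] by auto
    finally show ?thesis .
  qed
  show "(sgn (bv n z1 (e, f) (int j)) = sgn (bv n z1 (e, f) (int j + 1)) \<and>
            \<bar>bv n z1 (e, f) (int j)\<bar> < \<bar>bv n z1 (e, f) (int j + 1)\<bar>) \<longleftrightarrow>
        (sgn (bv n z2 (e, f) (int j)) = sgn (bv n z2 (e, f) (int j + 1)) \<and>
            \<bar>bv n z2 (e, f) (int j)\<bar> < \<bar>bv n z2 (e, f) (int j + 1)\<bar>)"
    using C[OF z1] C[OF z2] D by simp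
qed

lemma comp_eq_iff: assumes vB: "v \<in> BB n" shows "u \<circ> v = z \<longleftrightarrow> u = z \<circ> inv v"
proof
  assume "u \<circ> v = z"
  moreover have "v (inv v x) = x" for x using B_bij[OF vB] by (simp add: bij_is_surj surj_f_inv_f)
  ultimately show "u = z \<circ> inv v" by (metis comp_apply ext)
next
  assume "u = z \<circ> inv v"
  thus "u \<circ> v = z" using inv_B_app[OF vB] by (auto simp: fun_eq_iff)
qed

lemma gmult_out: "z \<notin> BB n \<Longrightarrow> gmult n f g z = 0"
  unfolding gmult_def using B_comp by (intro sum.neutral ballI) auto

lemma gmult_XJ:
  assumes zB: "z \<in> BB n"
  shows "gmult n (XJ n J) y z = (\<Sum>v\<in>VV n J z. y v)"
proof -
  have "gmult n (XJ n J) y z = (\<Sum>v\<in>BB n. \<Sum>u\<in>BB n. if u \<circ> v = z then XJ n J u * y v else 0)"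
    unfolding gmult_def by (rule sum.swap)
  also have "\<dots> = (\<Sum>v\<in>BB n. if Des n (z \<circ> inv v) \<subseteq> J then y v else 0)"
  proof (rule sum.cong[OF refl])
    fix v assume vB: "v \<in> BB n"
    have uB: "z \<circ> inv v \<in> BB n" using B_comp[OF zB B_inv[OF vB]] .
    have "(\<Sum>u\<in>BB n. if u \<circ> v = z then XJ n J u * y v else 0) = (\<Sum>u\<in>BB n. if u = z \<circ> inv v then XJ n J u * y v else 0)"
      using comp_eq_iff[OF vB] by (intro sum.cong) auto
    also have "\<dots> = XJ n J (z \<circ> inv v) * y v" using sum.delta[OF B_finite[of n], of "z \<circ> inv v" "\<lambda>u. XJ n J u * y v"] uB by simp
    finally show "(\<Sum>u\<in>BB n. if u \<circ> v = z then XJ n J u * y v else 0) = (if Des n (z \<circ> inv v) \<subseteq> J then y v else 0)"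
      using uB by (simp add: XJ_def)
  qed
  also have "\<dots> = (\<Sum>v\<in>VV n J z. y v)" unfolding VV_def by (rule sum.inter_filter[OF B_finite, symmetric])
  finally show ?thesis .
qed

lemma gmult_XJ_DF:
  assumes J0: "0 \<in> J" and Jn: "J \<subseteq> {0..<n}" and y: "y \<in> KF n"
  shows "gmult n (XJ n J) y \<in> DF n"
proof (rule invsetI)
  fix w assume "w \<notin> BB n" thus "gmult n (XJ n J) y w = 0" by (rule gmult_out)
next
  fix z1 z2 assume z1: "z1 \<in> BB n" and z2: "z2 \<in> BB n" and D: "Dz n z1 = Dz n z2"
  have "gmult n (XJ n J) y z1 = (\<Sum>v\<in>VV n J z1. y v)" using gmult_XJ[OF z1] .
  also have "\<dots> = (\<Sum>\<phi>\<in>Phi n J. y (bv n z1 \<phi>))" using sum.reindex_bij_betw[OF bv_bij[OF J0 Jn z1], of y] by (simp add: o_def)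
  also have "\<dots> = (\<Sum>\<phi>\<in>Phi n J. y (bv n z2 \<phi>))"
  proof (rule sum.cong[OF refl])
    fix \<phi> assume p: "\<phi> \<in> Phi n J"
    obtain e f where ef: "\<phi> = (e, f)" by (cases \<phi>)
    have "key n (bv n z1 (e, f)) = key n (bv n z2 (e, f))" using key_bv[OF J0 Jn z1 z2 D] p ef by simp
    thus "y (bv n z1 \<phi>) = y (bv n z2 \<phi>)"
      using invsetD2[OF y bv_B[OF J0 Jn z1] bv_B[OF J0 Jn z2]] p ef by simp
  qed
  also have "\<dots> = (\<Sum>v\<in>VV n J z2. y v)" using sum.reindex_bij_betw[OF bv_bij[OF J0 Jn z2], of y] by (simp add: o_def)
  also have "\<dots> = gmult n (XJ n J) y z2" using gmult_XJ[OF z2] by simp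
  finally show "gmult n (XJ n J) y z1 = gmult n (XJ n J) y z2" .
qed

lemma Dz_char:
  assumes wB: "w \<in> BB n" and j: "1 \<le> j" "j < n"
  shows "j \<in> Dz n w \<longleftrightarrow>
    (if sgn (w (int j)) = sgn (w (int j + 1))
     then (if sgn (w (int j)) = 1
           then \<not> (sgn (w (int j)) = sgn (w (int j + 1)) \<and> \<bar>w (int j)\<bar> < \<bar>w (int j + 1)\<bar>)
           else (sgn (w (int j)) = sgn (w (int j + 1)) \<and> \<bar>w (int j)\<bar> < \<bar>w (int j + 1)\<bar>))
     else sgn (w (int j)) = 1)"
proof -
  have n1: "w (int j) \<noteq> 0" using B_range[OF wB, of "int j"] j by auto
  have n2: "w (int j + 1) \<noteq> 0" using B_range[OF wB, of "int j + 1"] j by auto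
  have ab: "\<bar>w (int j)\<bar> \<noteq> \<bar>w (int j + 1)\<bar>"
  proof
    assume "\<bar>w (int j)\<bar> = \<bar>w (int j + 1)\<bar>"
    hence "w (int j) = w (int j + 1) \<or> w (int j) = w (- (int j + 1))"
      using B_odd[OF wB, of "int j + 1"] by (auto simp: abs_if split: if_splits)
    hence "int j = int j + 1 \<or> int j = - (int j + 1)" using B_inj[OF wB] by blast
    thus False by auto
  qed
  show ?thesis unfolding Dz_mem using j n1 n2 ab by (auto simp: sgn_if abs_if split: if_splits)
qed

lemma key_Dz: "w \<in> BB n \<Longrightarrow> w' \<in> BB n \<Longrightarrow> key n w = key n w' \<Longrightarrow> Dz n w = Dz n w'"
proof -
  assume wB: "w \<in> BB n" and wB': "w' \<in> BB n" and k: "key n w = key n w'"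
  show "Dz n w = Dz n w'"
  proof (intro set_eqI)
    fix j
    show "j \<in> Dz n w \<longleftrightarrow> j \<in> Dz n w'"
    proof (cases "1 \<le> j \<and> j < n")
      case True
      hence s1: "sgn (w (int j)) = sgn (w' (int j))" and s2: "sgn (w (int (Suc j))) = sgn (w' (int (Suc j)))"
        using key_eqD1[OF k, of j] key_eqD1[OF k, of "Suc j"] by auto
      have s2': "sgn (w (int j + 1)) = sgn (w' (int j + 1))" using s2 unfolding int_Suc' .
      have jj: "1 \<le> j" "j < n" using True by auto
      have kk: "(sgn (w (int j)) = sgn (w (int j + 1)) \<and> \<bar>w (int j)\<bar> < \<bar>w (int j + 1)\<bar>) =
        (sgn (w' (int j)) = sgn (w' (int j + 1)) \<and> \<bar>w' (int j)\<bar> < \<bar>w' (int j + 1)\<bar>)"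
        using key_eqD2[OF k jj] .
      note kk' = kk[unfolded s1 s2']
      note d1 = Dz_char[OF wB jj, unfolded s1 s2', unfolded kk']
      note d2 = Dz_char[OF wB' jj]
      show ?thesis by (simp only: d1 d2)
    next
      case False thus ?thesis unfolding Dz_mem by auto
    qed
  qed
qed

lemma DF_sub_KF: "DF n \<subseteq> KF n"
proof
  fix F assume F: "F \<in> DF n"
  show "F \<in> KF n"
  proof (rule invsetI)
    fix w assume "w \<notin> BB n" thus "F w = 0" using invsetD1[OF F] by simp
  next
    fix w w' assume "w \<in> BB n" "w' \<in> BB n" "key n w = key n w'"
    thus "F w = F w'" using invsetD2[OF F] key_Dz by blast
  qed
qed

lemma gmult_lin:
  "gmult n (\<lambda>w. \<Sum>t\<in>A. c t * t w) g = (\<lambda>z. \<Sum>t\<in>A. c t * gmult n t g z)"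
proof
  fix z
  have "gmult n (\<lambda>w. \<Sum>t\<in>A. c t * t w) g z =
     (\<Sum>u\<in>BB n. \<Sum>v\<in>BB n. \<Sum>t\<in>A. if u \<circ> v = z then c t * (t u * g v) else 0)"
    unfolding gmult_def
    by (intro sum.cong refl) (simp add: sum_distrib_right mult.assoc)
  also have "\<dots> = (\<Sum>u\<in>BB n. \<Sum>t\<in>A. \<Sum>v\<in>BB n. if u \<circ> v = z then c t * (t u * g v) else 0)"
    by (intro sum.cong refl sum.swap)
  also have "\<dots> = (\<Sum>t\<in>A. \<Sum>u\<in>BB n. \<Sum>v\<in>BB n. if u \<circ> v = z then c t * (t u * g v) else 0)"
    by (rule sum.swap)
  also have "\<dots> = (\<Sum>t\<in>A. c t * gmult n t g z)"
    unfolding gmult_def sum_distrib_left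
    by (intro sum.cong refl) simp
  finally show "gmult n (\<lambda>w. \<Sum>t\<in>A. c t * t w) g z = (\<Sum>t\<in>A. c t * gmult n t g z)" .
qed

lemma right_ideal:
  assumes n: "n \<ge> 1" and x: "x \<in> I0 n" and y: "y \<in> Omega n"
  shows "gmult n x y \<in> I0 n"
proof -
  obtain A c where A: "finite A" "A \<subseteq> {XJ n J | J. J \<subseteq> {0..<n} \<and> 0 \<in> J}" "x = (\<lambda>w. \<Sum>t\<in>A. c t * t w)"
    using x unfolding I0_def qspan_def by auto
  have yK: "y \<in> KF n" using y Omega_eq by simp
  have "gmult n t y \<in> DF n" if tA: "t \<in> A" for t
  proof -
    have "t \<in> {XJ n J | J. J \<subseteq> {0..<n} \<and> 0 \<in> J}" using A(2) tA by blast
    then obtain J where "t = XJ n J" "J \<subseteq> {0..<n}" "0 \<in> J" by blast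
    thus ?thesis using gmult_XJ_DF[OF _ _ yK] by simp
  qed
  hence "(\<lambda>z. \<Sum>t\<in>A. c t * gmult n t y z) \<in> DF n" by (rule invset_sum)
  thus ?thesis unfolding A(3) gmult_lin using I0_eq[OF n] by simp
qed

lemma Phi0_fst: assumes "(e, f) \<in> Phi n {0}" shows "f = (\<lambda>_. 0)"
  using assms unfolding Phi_def by (auto simp: fun_eq_iff)

lemma gen_eq:
  assumes n: "n \<ge> 1" and x: "x \<in> I0 n"
  shows "\<exists>y \<in> Omega n. x = gmult n (XJ n {0}) y"
proof -
  have xD: "x \<in> DF n" using x I0_eq[OF n] by simp
  have xK: "x \<in> KF n" using xD DF_sub_KF by blast
  define pos where "pos w = (\<forall>j. 1 \<le> j \<and> j \<le> n \<longrightarrow> w (int j) > 0)" for w :: "int \<Rightarrow> int"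
  define y where "y w = (if w \<in> BB n \<and> pos w then x w else 0)" for w
  have yK: "y \<in> KF n"
  proof (rule invsetI)
    fix w assume "w \<notin> BB n" thus "y w = 0" unfolding y_def by simp
  next
    fix w w' assume w: "w \<in> BB n" "w' \<in> BB n" and k: "key n w = key n w'"
    have "pos w \<longleftrightarrow> pos w'"
    proof -
      have "w (int j) > 0 \<longleftrightarrow> w' (int j) > 0" if "1 \<le> j" "j \<le> n" for j
        using key_eqD1[OF k that] by (auto simp: sgn_if split: if_splits)
      thus ?thesis unfolding pos_def by blast
    qed
    moreover have "x w = x w'" using invsetD2[of x n "\<lambda>w w'. key n w = key n w'" w w'] xK w k by simp
    ultimately show "y w = y w'" unfolding y_def using w by simp
  qed
  hence yO: "y \<in> Omega n" using Omega_eq by simp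
  have J0: "0 \<in> {0::nat}" and Jn: "{0::nat} \<subseteq> {0..<n}" using n by auto
  define e1 where "e1 i = (if 1 \<le> i \<and> i \<le> n then 1 else 0 :: int)" for i
  let ?p1 = "(e1, \<lambda>_::nat. 0::nat)"
  have "{j \<in> {0::nat}. 0 < j} \<union> {n} = {n}" by auto
  hence nx: "nxt n {0} 0 = n" unfolding nxt_def by (simp only: Min_singleton)
  have "{i \<in> {1..n}. (\<lambda>_::nat. 0::nat) i = 0} = {1..n}" by auto
  hence cn: "card {i \<in> {1..n}. (\<lambda>_::nat. 0::nat) i = 0} = n" by simp
  have p1: "?p1 \<in> Phi n {0}" unfolding Phi_def e1_def using nx cn by auto
  have "gmult n (XJ n {0}) y z = x z" for z
  proof (cases "z \<in> BB n")
    case False thus ?thesis using gmult_out invsetD1[OF xD] by simp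
  next
    case zB: True
    have finP: "finite (Phi n {0})"
      using bij_betw_finite[OF bv_bij[OF J0 Jn zB]] B_finite finite_subset unfolding VV_def
      by (metis (no_types, lifting) mem_Collect_eq subsetI)
    have "gmult n (XJ n {0}) y z = (\<Sum>\<phi>\<in>Phi n {0}. y (bv n z \<phi>))"
      using gmult_XJ[OF zB] sum.reindex_bij_betw[OF bv_bij[OF J0 Jn zB], of y] by (simp add: o_def)
    also have "\<dots> = y (bv n z ?p1)"
    proof -
      have "y (bv n z \<phi>) = 0" if "\<phi> \<in> Phi n {0} - {?p1}" for \<phi>
      proof -
        obtain e f where ef: "\<phi> = (e, f)" by (cases \<phi>)
        have efP: "(e, f) \<in> Phi n {0}" using that ef by simp
        have f0: "f = (\<lambda>_. 0)" using Phi0_fst[OF efP] .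
        have "e \<noteq> e1" using that ef f0 by auto
        then obtain j where "e j \<noteq> e1 j" by auto
        hence j: "1 \<le> j" "j \<le> n" and ej: "e j \<noteq> 1" using efP unfolding Phi_def e1_def by (auto split: if_splits)
        have "sgn (bv n z (e, f) (int j)) = e j" using bv_sgn[OF J0 Jn zB efP j] .
        hence "\<not> bv n z (e, f) (int j) > 0" using ej by auto
        hence "\<not> pos (bv n z (e, f))" unfolding pos_def using j by blast
        thus ?thesis unfolding y_def ef by simp
      qed
      thus ?thesis using sum.remove[OF finP p1, of "\<lambda>\<phi>. y (bv n z \<phi>)"] sum.neutral by (metis (no_types, lifting) add.right_neutral)
    qed
    also have "\<dots> = x z"
    proof -
      let ?v = "bv n z ?p1"
      have vB: "?v \<in> BB n" using bv_B[OF J0 Jn zB p1] .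
      have vj: "?v (int j) = int (pp n z e1 (\<lambda>_. 0) j)" if "1 \<le> j" "j \<le> n" for j
        using bv_pos[OF J0 Jn zB p1 that] that unfolding e1_def by simp
      have "pos ?v" unfolding pos_def using vj unfolding pp_def by simp
      moreover have "Dz n ?v = Dz n z"
      proof (intro set_eqI)
        fix j show "j \<in> Dz n ?v \<longleftrightarrow> j \<in> Dz n z"
        proof (cases "1 \<le> j \<and> j < n")
          case True
          hence j1: "1 \<le> j" "j \<le> n" and j2: "1 \<le> Suc j" "Suc j \<le> n" by auto
          have "?v (int j + 1) < ?v (int j) \<longleftrightarrow> pp n z e1 (\<lambda>_. 0) (Suc j) < pp n z e1 (\<lambda>_. 0) j"
            using vj[OF j1] vj[OF j2] unfolding int_Suc' by simp
          also have "\<dots> \<longleftrightarrow> lt z e1 (Suc j) < lt z e1 j"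
            using pp_less_iff[OF J0 Jn zB p1 j2 j1] by simp
          also have "\<dots> \<longleftrightarrow> z (int j + 1) < z (int j)"
            unfolding lt_def e1_def int_Suc' using j1 j2 by simp
          finally show ?thesis unfolding Dz_mem using True by simp
        next
          case False thus ?thesis unfolding Dz_mem by auto
        qed
      qed
      ultimately show ?thesis unfolding y_def using vB invsetD2[of x n "\<lambda>w w'. Dz n w = Dz n w'" ?v z] xD zB by simp
    qed
    finally show ?thesis .
  qed
  thus ?thesis using yO by (intro bexI[of _ y]) auto
qed

theorem corollary7p7:
  fixes n :: nat
  assumes "n \<ge> 1"
  shows "I0 n \<subseteq> Omega n
    \<and> (\<forall>x\<in>I0 n. \<forall>y\<in>Omega n. gmult n x y \<in> I0 n)
    \<and> I0 n = {gmult n (XJ n {0}) y | y. y \<in> Omega n}"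
proof (intro conjI ballI)
  show "I0 n \<subseteq> Omega n" using I0_eq[OF assms] DF_sub_KF Omega_eq by blast
next
  fix x y assume "x \<in> I0 n" "y \<in> Omega n"
  thus "gmult n x y \<in> I0 n" using right_ideal[OF assms] by blast
next
  have X0: "XJ n {0} \<in> I0 n" unfolding I0_def by (rule qspan_base) (use assms in auto)
  show "I0 n = {gmult n (XJ n {0}) y | y. y \<in> Omega n}"
  proof
    show "I0 n \<subseteq> {gmult n (XJ n {0}) y | y. y \<in> Omega n}" using gen_eq[OF assms] by blast
    show "{gmult n (XJ n {0}) y | y. y \<in> Omega n} \<subseteq> I0 n" using right_ideal[OF assms X0] by blast
  qed
qed

end
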